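(* Let $\Lambda$ be a finite measure on $[0,1]$ with $\Lambda(\{1\})=0$, let $(\Pi_t)_{t\ge0}$ be the $\Lambda$-coalescent and $\mathcal{F}_t=\sigma(\Pi_s: s\le t)$. Let $T>0$ and let $\mathcal{W}=\{w_i: i\in\mathbb{N}\}$ be a random, $\mathcal{F}_T$-measurable, infinite subset of $\mathbb{N}$ with $w_i<w_j$ whenever $i<j$, such that $\mathcal{W}$ contains precisely one element of each block of $\Pi_T$. For $n\in\mathbb{N}$ and $t\ge0$ let $\mathrm{bl}_{\Pi_t}(n)$ be the unique block of $\Pi_t$ containing $n$. Define a process $(\widetilde\Pi_t)_{t\ge T}$ of partitions of $\mathbb{N}$ by: $i$ and $j$ are in the same block of $\widetilde\Pi_t$ if and only if $\mathrm{bl}_{\Pi_t}(w_i)=\mathrm{bl}_{\Pi_t}(w_j)$. Then $(\widetilde\Pi_t)_{t\ge T}$ is a $\Lambda$-coalescent (with initial time $T$).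
   Context: For $n\in\mathbb{N}$, let $\iota_n$ be the restriction map from partitions of $\mathbb{N}$ to partitions of $\{1,\dots,n\}$. A $\Lambda$-coalescent with initial time $T\ge 0$ is a Markov process $(\Pi_t)_{t\ge T}$ with values in partitions of $\mathbb{N}$, with $\Pi_T$ the partition into singletons, such that for every $n$, $\iota_n(\Pi_t)$ is a Markov chain in which, whenever it has $i$ blocks, each particular $k$-tuple of blocks ($2\le k\le i$) merges into one block at rate $\lambda_{i,k}=\int_0^1x^{k-2}(1-x)^{i-k}\Lambda(dx)$, independently of all other $k$-tuples. "The $\Lambda$-coalescent" means the one with initial time $0$. *)

theory Defs
  imports "HOL-Probability.Probability"
begin

text \<open>Partitions of a set A, represented as sets of blocks.
  The paper's index set {1,2,...} is represented by the type nat = {0,1,...};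
  the paper's {1..n} becomes {..<n}.\<close>

definition is_part :: "nat set \<Rightarrow> nat set set \<Rightarrow> bool" where
  "is_part A P \<longleftrightarrow> (\<forall>B\<in>P. B \<noteq> {} \<and> B \<subseteq> A)
     \<and> (\<forall>B\<in>P. \<forall>C\<in>P. B \<noteq> C \<longrightarrow> B \<inter> C = {}) \<and> \<Union>P = A"

definition singletons :: "nat set \<Rightarrow> nat set set" where
  "singletons A = (\<lambda>x. {x}) ` A"

definition restr :: "nat \<Rightarrow> nat set set \<Rightarrow> nat set set" where
  "restr n P = ((\<lambda>B. B \<inter> {..<n}) ` P) - {{}}"

definition bl :: "nat set set \<Rightarrow> nat \<Rightarrow> nat set" where
  "bl P x = (THE B. B \<in> P \<and> x \<in> B)"

definition part_of_rel :: "(nat \<Rightarrow> nat \<Rightarrow> bool) \<Rightarrow> nat set set" where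
  "part_of_rel R = {{j. R i j} | i. True}"

definition states :: "nat \<Rightarrow> nat set set set" where
  "states n = {P. is_part {..<n} P}"

definition lam :: "real measure \<Rightarrow> nat \<Rightarrow> nat \<Rightarrow> real" where
  "lam \<Lambda> i k = integral\<^sup>L \<Lambda> (\<lambda>x. x ^ (k - 2) * (1 - x) ^ (i - k))"

text \<open>Off-diagonal rate: q arises from p by merging the k = card (p - q) >= 2 blocks
  p - q into one block (this tuple of blocks is uniquely determined by p and q).\<close>
definition rate_off :: "real measure \<Rightarrow> nat set set \<Rightarrow> nat set set \<Rightarrow> real" where
  "rate_off \<Lambda> p q = (if p \<noteq> q \<and> 2 \<le> card (p - q) \<and> q = insert (\<Union>(p - q)) (p \<inter> q)
      then lam \<Lambda> (card p) (card (p - q)) else 0)"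

definition Qmat :: "real measure \<Rightarrow> nat \<Rightarrow> nat set set \<Rightarrow> nat set set \<Rightarrow> real" where
  "Qmat \<Lambda> n p q = (if p = q then - (\<Sum>r\<in>states n - {p}. rate_off \<Lambda> p r) else rate_off \<Lambda> p q)"

fun Qpow :: "real measure \<Rightarrow> nat \<Rightarrow> nat \<Rightarrow> nat set set \<Rightarrow> nat set set \<Rightarrow> real" where
  "Qpow \<Lambda> n 0 p q = (if p = q then 1 else 0)"
| "Qpow \<Lambda> n (Suc m) p q = (\<Sum>r\<in>states n. Qmat \<Lambda> n p r * Qpow \<Lambda> n m r q)"

definition trans :: "real measure \<Rightarrow> nat \<Rightarrow> real \<Rightarrow> nat set set \<Rightarrow> nat set set \<Rightarrow> real" where
  "trans \<Lambda> n t p q = (\<Sum>m. t ^ m / fact m * Qpow \<Lambda> n m p q)"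

text \<open>Probability of a path of the chain started in p at time t and visiting
  the states q_i at the times s_i (list of (s_i, q_i)).\<close>
fun fdd :: "real measure \<Rightarrow> nat \<Rightarrow> real \<Rightarrow> nat set set \<Rightarrow> (real \<times> nat set set) list \<Rightarrow> real" where
  "fdd \<Lambda> n t p [] = 1"
| "fdd \<Lambda> n t p ((s, q) # xs) = trans \<Lambda> n (s - t) p q * fdd \<Lambda> n s q xs"

text \<open>Lambda-coalescent with initial time T on the probability space M:
  partition-valued, started in singletons at time T, and for every n the
  restriction to {..<n} is a continuous-time Markov chain with Q-matrix Qmat,
  expressed through its finite-dimensional distributions.\<close>
definition lambda_coalescent ::
  "real measure \<Rightarrow> 'a measure \<Rightarrow> real \<Rightarrow> (real \<Rightarrow> 'a \<Rightarrow> nat set set) \<Rightarrow> bool" where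
  "lambda_coalescent \<Lambda> M T Pr \<longleftrightarrow>
     prob_space M
   \<and> (\<forall>t\<ge>T. \<forall>\<omega>\<in>space M. is_part UNIV (Pr t \<omega>))
   \<and> (\<forall>\<omega>\<in>space M. Pr T \<omega> = singletons UNIV)
   \<and> (\<forall>t\<ge>T. \<forall>n p. {\<omega>\<in>space M. restr n (Pr t \<omega>) = p} \<in> sets M)
   \<and> (\<forall>n xs. sorted_wrt (<) (map fst xs) \<and> (\<forall>x\<in>set xs. T \<le> fst x \<and> snd x \<in> states n)
        \<longrightarrow> measure M {\<omega>\<in>space M. \<forall>x\<in>set xs. restr n (Pr (fst x) \<omega>) = snd x}
            = fdd \<Lambda> n T (singletons {..<n}) xs)"

text \<open>Natural filtration F_T = sigma(Pi_s : 0 <= s <= T), partitions carrying the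
  sigma-algebra generated by the restriction maps.\<close>
definition nat_filtration :: "'a measure \<Rightarrow> (real \<Rightarrow> 'a \<Rightarrow> nat set set) \<Rightarrow> real \<Rightarrow> 'a set set" where
  "nat_filtration M Pr T = sigma_sets (space M)
     {{\<omega>\<in>space M. restr n (Pr s \<omega>) = p} | s n p. 0 \<le> s \<and> s \<le> T}"

end

theory Submission
  imports Defs
begin
lemma finite_states: "finite (states n)"
proof -
  have "states n \<subseteq> Pow (Pow {..<n})" by (auto simp: states_def is_part_def)
  thus ?thesis by (rule finite_subset) auto
qed

lemma states_finite_elem: "p \<in> states n \<Longrightarrow> finite p"
  using finite_states by (auto simp: states_def is_part_def intro: finite_subset[of p "Pow {..<n}"])

definition fB :: "(nat \<Rightarrow> nat) \<Rightarrow> nat \<Rightarrow> nat set \<Rightarrow> nat set" where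
  "fB g n B = {i. i < n \<and> g i \<in> B}"

definition phi :: "(nat \<Rightarrow> nat) \<Rightarrow> nat \<Rightarrow> nat set set \<Rightarrow> nat set set" where
  "phi g n P = fB g n ` P - {{}}"

definition merge :: "nat set set \<Rightarrow> nat set set \<Rightarrow> nat set set" where
  "merge P D = insert (\<Union>D) (P - D)"

lemma phi_states:
  assumes "p \<in> states K" "\<forall>i<n. g i < K"
  shows "phi g n p \<in> states n"
proof -
  have P: "\<forall>B\<in>p. B \<noteq> {} \<and> B \<subseteq> {..<K}" "\<forall>B\<in>p. \<forall>C\<in>p. B \<noteq> C \<longrightarrow> B \<inter> C = {}" "\<Union>p = {..<K}"
    using assms(1) by (auto simp: states_def is_part_def)
  have 1: "\<forall>B\<in>phi g n p. B \<noteq> {} \<and> B \<subseteq> {..<n}" by (auto simp: phi_def fB_def)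
  have 2: "\<forall>B\<in>phi g n p. \<forall>C\<in>phi g n p. B \<noteq> C \<longrightarrow> B \<inter> C = {}"
  proof (intro ballI impI)
    fix B C assume "B \<in> phi g n p" "C \<in> phi g n p" "B \<noteq> C"
    then obtain B' C' where "B' \<in> p" "C' \<in> p" "B = fB g n B'" "C = fB g n C'" by (auto simp: phi_def)
    with \<open>B \<noteq> C\<close> have "B' \<inter> C' = {}" using P(2) by metis
    thus "B \<inter> C = {}" using \<open>B = fB g n B'\<close> \<open>C = fB g n C'\<close> by (auto simp: fB_def)
  qed
  have 3: "\<Union>(phi g n p) = {..<n}"
  proof
    show "\<Union>(phi g n p) \<subseteq> {..<n}" using 1 by auto
    show "{..<n} \<subseteq> \<Union>(phi g n p)"
    proof
      fix i assume "i \<in> {..<n}"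
      hence "g i \<in> \<Union>p" using assms(2) P(3) by auto
      then obtain B where "B \<in> p" "g i \<in> B" by auto
      hence "i \<in> fB g n B" "fB g n B \<in> phi g n p" using \<open>i \<in> {..<n}\<close> by (auto simp: fB_def phi_def)
      thus "i \<in> \<Union>(phi g n p)" by auto
    qed
  qed
  show ?thesis using 1 2 3 by (simp add: states_def is_part_def)
qed

lemma fB_inj:
  assumes "p \<in> states K" "B \<in> p" "B' \<in> p" "fB g n B = fB g n B'" "fB g n B \<noteq> {}"
  shows "B = B'"
proof -
  obtain i where "i \<in> fB g n B" using assms(5) by auto
  hence "g i \<in> B" "g i \<in> B'" using assms(4) by (auto simp: fB_def)
  thus ?thesis using assms(1-3) by (auto simp: states_def is_part_def)
qed

lemma states_D: assumes "p \<in> states K"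
  shows "\<And>B. B \<in> p \<Longrightarrow> B \<noteq> {}" "\<And>B. B \<in> p \<Longrightarrow> B \<subseteq> {..<K}"
   "\<And>B C. B \<in> p \<Longrightarrow> C \<in> p \<Longrightarrow> B \<noteq> C \<Longrightarrow> B \<inter> C = {}" "\<Union>p = {..<K}"
  using assms by (auto simp: states_def is_part_def)

lemma two_elems: assumes "2 \<le> card D" shows "\<exists>a b. a \<in> D \<and> b \<in> D \<and> a \<noteq> b"
proof -
  have f: "finite D" using assms by (metis card.infinite not_numeral_le_zero)
  have "\<not> card D \<le> Suc 0" using assms by auto
  thus ?thesis using card_le_Suc0_iff_eq[OF f] by blast
qed

lemma Union_notin:
  assumes "p \<in> states K" "D \<subseteq> p" "2 \<le> card D" "B \<in> p"
  shows "\<Union>D \<noteq> B"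
proof
  assume eq: "\<Union>D = B"
  from assms(3) obtain B1 B2 where "B1 \<in> D" "B2 \<in> D" "B1 \<noteq> B2"
    using two_elems by blast
  then obtain B3 where "B3 \<in> D" "B3 \<noteq> B" by blast
  have p3: "B3 \<in> p" using \<open>B3 \<in> D\<close> assms(2) by auto
  have "B3 \<subseteq> B" using eq \<open>B3 \<in> D\<close> by auto
  moreover have "B3 \<inter> B = {}" using states_D(3)[OF assms(1) p3 assms(4) \<open>B3 \<noteq> B\<close>] .
  moreover have "B3 \<noteq> {}" using states_D(1)[OF assms(1) p3] .
  ultimately show False by auto
qed

lemma merge_diff: assumes "p \<in> states K" "D \<subseteq> p" "2 \<le> card D"
  shows "p - merge p D = D" "p \<inter> merge p D = p - D"
  using Union_notin[OF assms] assms(2) by (auto simp: merge_def)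

lemma merge_neq: assumes "p \<in> states K" "D \<subseteq> p" "2 \<le> card D"
  shows "merge p D \<noteq> p"
  using merge_diff[OF assms] assms(3) by (metis Diff_cancel card.empty not_numeral_le_zero)

lemma merge_states: assumes "p \<in> states K" "D \<subseteq> p" "2 \<le> card D"
  shows "merge p D \<in> states K"
proof -
  note S = states_D[OF assms(1)]
  have "D \<noteq> {}" using assms(3) by auto
  then obtain B0 where "B0 \<in> D" by auto
  have 1: "\<forall>B\<in>merge p D. B \<noteq> {} \<and> B \<subseteq> {..<K}"
  proof
    fix B assume "B \<in> merge p D"
    hence "B = \<Union>D \<or> B \<in> p" by (auto simp: merge_def)
    thus "B \<noteq> {} \<and> B \<subseteq> {..<K}"
    proof
      assume "B = \<Union>D"
      moreover have "B0 \<subseteq> \<Union>D" "B0 \<noteq> {}" using \<open>B0 \<in> D\<close> S(1) assms(2) by auto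
      moreover have "\<Union>D \<subseteq> {..<K}" using S(2) assms(2) by blast
      ultimately show ?thesis by blast
    qed (use S in blast)
  qed
  have 2: "\<forall>B\<in>merge p D. \<forall>C\<in>merge p D. B \<noteq> C \<longrightarrow> B \<inter> C = {}"
  proof (intro ballI impI)
    fix B C assume B: "B \<in> merge p D" and C: "C \<in> merge p D" and ne: "B \<noteq> C"
    have X: "\<And>E. E \<in> p - D \<Longrightarrow> E \<inter> \<Union>D = {}"
    proof -
      fix E assume "E \<in> p - D"
      hence "\<And>F. F \<in> D \<Longrightarrow> E \<inter> F = {}" using S(3) assms(2) by blast
      thus "E \<inter> \<Union>D = {}" by blast
    qed
    have B': "B = \<Union>D \<or> B \<in> p - D" and C': "C = \<Union>D \<or> C \<in> p - D"
      using B C by (auto simp: merge_def)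
    show "B \<inter> C = {}"
    proof (cases "B = \<Union>D")
      case True
      hence "C \<in> p - D" using C' ne by auto
      thus ?thesis using X[of C] True by blast
    next
      case False
      hence Bp: "B \<in> p - D" using B' by auto
      show ?thesis
      proof (cases "C = \<Union>D")
        case True thus ?thesis using X[OF Bp] by blast
      next
        case False
        hence "C \<in> p - D" using C' by auto
        thus ?thesis using S(3) Bp ne by blast
      qed
    qed
  qed
  have "\<Union>(merge p D) = \<Union>D \<union> \<Union>(p - D)" by (simp add: merge_def)
  also have "\<dots> = \<Union>p" using assms(2) by blast
  finally have 3: "\<Union>(merge p D) = {..<K}" using S(4) by simp
  show ?thesis using 1 2 3 by (simp add: states_def is_part_def)
qed

lemma merge_inj: assumes "p \<in> states K" "D \<subseteq> p" "2 \<le> card D" "D' \<subseteq> p" "2 \<le> card D'"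
  "merge p D = merge p D'" shows "D = D'"
proof -
  have "D = p - merge p D" using merge_diff(1)[OF assms(1-3)] by simp
  also have "\<dots> = p - merge p D'" using assms(6) by simp
  also have "\<dots> = D'" using merge_diff(1)[OF assms(1,4,5)] .
  finally show ?thesis .
qed

definition cond :: "nat set set \<Rightarrow> nat set set \<Rightarrow> bool" where
  "cond p r \<longleftrightarrow> p \<noteq> r \<and> 2 \<le> card (p - r) \<and> r = insert (\<Union>(p - r)) (p \<inter> r)"

lemma rate_off_cond: "rate_off \<Lambda> p r = (if cond p r then lam \<Lambda> (card p) (card (p - r)) else 0)"
  by (simp add: rate_off_def cond_def)

lemma cond_merge: assumes "p \<in> states K" "D \<subseteq> p" "2 \<le> card D"
  shows "cond p (merge p D)"
proof -
  have a: "p - merge p D = D" "p \<inter> merge p D = p - D" using merge_diff[OF assms] by auto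
  show ?thesis unfolding cond_def a using merge_neq[OF assms] assms(3) by (simp add: merge_def)
qed

lemma cond_D: assumes "cond p r" shows "r = merge p (p - r)" "p - r \<subseteq> p" "2 \<le> card (p - r)"
proof -
  show "r = merge p (p - r)" using assms unfolding cond_def merge_def by (simp add: Diff_Diff_Int)
  show "p - r \<subseteq> p" by blast
  show "2 \<le> card (p - r)" using assms unfolding cond_def by blast
qed

lemma phi_merge:
  assumes "p \<in> states K" "D \<subseteq> p"
  shows "phi g n (merge p D) = insert (\<Union>(fB g n ` D - {{}})) (phi g n p - (fB g n ` D - {{}})) - {{}}"
proof -
  have u: "fB g n (\<Union>D) = \<Union>(fB g n ` D - {{}})" by (auto simp: fB_def)
  have r: "fB g n ` (p - D) - {{}} = phi g n p - (fB g n ` D - {{}})"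
  proof
    show "fB g n ` (p - D) - {{}} \<subseteq> phi g n p - (fB g n ` D - {{}})"
    proof
      fix x assume "x \<in> fB g n ` (p - D) - {{}}"
      then obtain B where B: "B \<in> p" "B \<notin> D" "x = fB g n B" "x \<noteq> {}" by auto
      have "x \<notin> fB g n ` D"
      proof
        assume "x \<in> fB g n ` D"
        then obtain B' where "B' \<in> D" "x = fB g n B'" by auto
        hence "B = B'" using fB_inj[OF assms(1) B(1), of B' g n] B assms(2) by auto
        thus False using B \<open>B' \<in> D\<close> by auto
      qed
      thus "x \<in> phi g n p - (fB g n ` D - {{}})" using B by (auto simp: phi_def)
    qed
    show "phi g n p - (fB g n ` D - {{}}) \<subseteq> fB g n ` (p - D) - {{}}"
      by (auto simp: phi_def)
  qed
  have "phi g n (merge p D) = insert (fB g n (\<Union>D)) (fB g n ` (p - D)) - {{}}"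
    by (simp add: phi_def merge_def)
  also have "\<dots> = insert (fB g n (\<Union>D)) (fB g n ` (p - D) - {{}}) - {{}}" by auto
  finally show ?thesis using u r by simp
qed

lemma mergeish_big: assumes "P \<in> states n" "E \<subseteq> P" "2 \<le> card E"
  shows "insert (\<Union>E) (P - E) - {{}} = merge P E"
proof -
  have "E \<noteq> {}" using assms(3) by auto
  hence "\<Union>E \<noteq> {}" using states_D(1)[OF assms(1)] assms(2) by auto
  moreover have "{} \<notin> P" using states_D(1)[OF assms(1)] by auto
  ultimately show ?thesis by (auto simp: merge_def)
qed

lemma mergeish_small: assumes "P \<in> states n" "E \<subseteq> P" "\<not> 2 \<le> card E"
  shows "insert (\<Union>E) (P - E) - {{}} = P"
proof -
  have fin: "finite E" using assms(1,2) states_finite_elem finite_subset by blast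
  have "{} \<notin> P" using states_D(1)[OF assms(1)] by auto
  from assms(3) have "card E = 0 \<or> card E = 1" by auto
  thus ?thesis
  proof
    assume "card E = 0" hence "E = {}" using fin by simp
    thus ?thesis using \<open>{} \<notin> P\<close> by auto
  next
    assume "card E = 1" then obtain e where "E = {e}" by (auto simp: card_Suc_eq)
    thus ?thesis using \<open>{} \<notin> P\<close> assms(2) by auto
  qed
qed

lemma inj_marked: "p \<in> states K \<Longrightarrow> inj_on (fB g n) {B\<in>p. fB g n B \<noteq> {}}"
  unfolding inj_on_def using fB_inj by blast

lemma phi_marked: "phi g n p = fB g n ` {B\<in>p. fB g n B \<noteq> {}}"
  unfolding phi_def by blast

lemma card_phi:
  assumes "p \<in> states K"
  shows "card p = card (phi g n p) + card {B\<in>p. fB g n B = {}}"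
proof -
  have f: "finite p" using assms states_finite_elem by blast
  have "p = {B\<in>p. fB g n B \<noteq> {}} \<union> {B\<in>p. fB g n B = {}}" by blast
  hence "card p = card {B\<in>p. fB g n B \<noteq> {}} + card {B\<in>p. fB g n B = {}}"
    using f by (metis (no_types, lifting) card_Un_disjoint disjoint_iff finite_Un mem_Collect_eq)
  moreover have "card {B\<in>p. fB g n B \<noteq> {}} = card (phi g n p)"
    unfolding phi_marked using card_image[OF inj_marked[OF assms]] by simp
  ultimately show ?thesis by simp
qed

lemma sum_pow_card:
  assumes "finite A"
  shows "(\<Sum>U\<in>Pow A. h (card U)) = (\<Sum>l\<le>card A. of_nat (card A choose l) * (h l :: real))"
proof -
  have fP: "finite (Pow A)" using assms by simp
  have im: "card ` Pow A \<subseteq> {..card A}" using assms by (auto intro: card_mono)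
  have "(\<Sum>U\<in>Pow A. h (card U)) = (\<Sum>l\<le>card A. \<Sum>U\<in>{U \<in> Pow A. card U = l}. h (card U))"
    using sum.group[OF fP _ im, of "\<lambda>U. h (card U)"] by simp
  also have "\<dots> = (\<Sum>l\<le>card A. of_nat (card A choose l) * h l)"
  proof (rule sum.cong[OF refl])
    fix l assume "l \<in> {..card A}"
    have "{U \<in> Pow A. card U = l} = {B. B \<subseteq> A \<and> card B = l}" by auto
    hence c: "card {U \<in> Pow A. card U = l} = card A choose l" using n_subsets[OF assms] by simp
    have "(\<Sum>U\<in>{U \<in> Pow A. card U = l}. h (card U)) = (\<Sum>U\<in>{U \<in> Pow A. card U = l}. h l)"
      by (rule sum.cong) auto
    also have "\<dots> = of_nat (card A choose l) * h l" using c by simp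
    finally show "(\<Sum>U\<in>{U \<in> Pow A. card U = l}. h (card U)) = of_nat (card A choose l) * h l" .
  qed
  finally show ?thesis .
qed

lemma phi_merge_cases:
  assumes p: "p \<in> states K" and g: "\<forall>i<n. g i < K" and D: "D \<subseteq> p"
  shows "fB g n ` D - {{}} \<subseteq> phi g n p"
    "2 \<le> card (fB g n ` D - {{}}) \<Longrightarrow> phi g n (merge p D) = merge (phi g n p) (fB g n ` D - {{}})"
    "\<not> 2 \<le> card (fB g n ` D - {{}}) \<Longrightarrow> phi g n (merge p D) = phi g n p"
proof -
  have Pst: "phi g n p \<in> states n" by (rule phi_states[OF p g])
  show sub: "fB g n ` D - {{}} \<subseteq> phi g n p" using D by (auto simp: phi_def)
  show "2 \<le> card (fB g n ` D - {{}}) \<Longrightarrow> phi g n (merge p D) = merge (phi g n p) (fB g n ` D - {{}})"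
    using phi_merge[OF p D] mergeish_big[OF Pst sub] by simp
  show "\<not> 2 \<le> card (fB g n ` D - {{}}) \<Longrightarrow> phi g n (merge p D) = phi g n p"
    using phi_merge[OF p D] mergeish_small[OF Pst sub] by simp
qed

lemma offdiag:
  assumes p: "p \<in> states K" and g: "\<forall>i<n. g i < K" and q: "q \<in> states n" and qne: "q \<noteq> phi g n p"
   and ident: "\<And>(A::nat set set) c k. finite A \<Longrightarrow> 2 \<le> k \<Longrightarrow> k \<le> c \<Longrightarrow>
        (\<Sum>U\<in>Pow A. lam \<Lambda> (c + card A) (k + card U)) = lam \<Lambda> c k"
  shows "(\<Sum>r\<in>{r\<in>states K. phi g n r = q}. rate_off \<Lambda> p r) = rate_off \<Lambda> (phi g n p) q"
proof -
  let ?P = "phi g n p"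
  have Pst: "?P \<in> states n" by (rule phi_states[OF p g])
  have fp: "finite p" using p states_finite_elem by blast
  define Dset where "Dset = {D. D \<subseteq> p \<and> 2 \<le> card D \<and> phi g n (merge p D) = q}"
  have fin: "finite {r\<in>states K. phi g n r = q}" using finite_states by simp
  have "(\<Sum>r\<in>{r\<in>states K. phi g n r = q}. rate_off \<Lambda> p r)
      = (\<Sum>r\<in>{r\<in>states K. phi g n r = q}. if cond p r then lam \<Lambda> (card p) (card (p - r)) else 0)"
    by (simp add: rate_off_cond)
  also have "\<dots> = (\<Sum>r\<in>{r\<in>{r\<in>states K. phi g n r = q}. cond p r}. lam \<Lambda> (card p) (card (p - r)))"
    by (rule sum.inter_filter[OF fin, symmetric])
  also have "{r\<in>{r\<in>states K. phi g n r = q}. cond p r} = merge p ` Dset"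
  proof
    show "{r\<in>{r\<in>states K. phi g n r = q}. cond p r} \<subseteq> merge p ` Dset"
    proof
      fix r assume "r \<in> {r\<in>{r\<in>states K. phi g n r = q}. cond p r}"
      hence r: "phi g n r = q" "cond p r" by auto
      have "p - r \<in> Dset" using cond_D[OF r(2)] r(1) unfolding Dset_def by auto
      thus "r \<in> merge p ` Dset" using cond_D(1)[OF r(2)] by blast
    qed
    show "merge p ` Dset \<subseteq> {r\<in>{r\<in>states K. phi g n r = q}. cond p r}"
      using merge_states[OF p] cond_merge[OF p] unfolding Dset_def by blast
  qed
  also have "(\<Sum>r\<in>merge p ` Dset. lam \<Lambda> (card p) (card (p - r))) = (\<Sum>D\<in>Dset. lam \<Lambda> (card p) (card D))"
  proof -
    have inj: "inj_on (merge p) Dset" unfolding inj_on_def Dset_def using merge_inj[OF p] by blast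
    have "(\<Sum>r\<in>merge p ` Dset. lam \<Lambda> (card p) (card (p - r))) = (\<Sum>D\<in>Dset. lam \<Lambda> (card p) (card (p - merge p D)))"
      using sum.reindex[OF inj] by simp
    also have "\<dots> = (\<Sum>D\<in>Dset. lam \<Lambda> (card p) (card D))"
      by (rule sum.cong[OF refl]) (simp add: Dset_def merge_diff(1)[OF p])
    finally show ?thesis .
  qed
  finally have L: "(\<Sum>r\<in>{r\<in>states K. phi g n r = q}. rate_off \<Lambda> p r) = (\<Sum>D\<in>Dset. lam \<Lambda> (card p) (card D))" .
  show ?thesis
  proof (cases "\<exists>E. E \<subseteq> ?P \<and> 2 \<le> card E \<and> q = merge ?P E")
    case True
    then obtain E where E: "E \<subseteq> ?P" "2 \<le> card E" "q = merge ?P E" by blast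
    have R: "rate_off \<Lambda> ?P q = lam \<Lambda> (card ?P) (card E)"
      using cond_merge[OF Pst E(1,2)] merge_diff(1)[OF Pst E(1,2)] E(3) by (simp add: rate_off_cond)
    define unm where "unm = {B\<in>p. fB g n B = {}}"
    define Em where "Em = {B\<in>p. fB g n B \<in> E}"
    have Enon: "{} \<notin> E" using E(1) by (auto simp: phi_def)
    have Eimg: "fB g n ` Em = E"
    proof
      show "fB g n ` Em \<subseteq> E" by (auto simp: Em_def)
      show "E \<subseteq> fB g n ` Em"
      proof
        fix e assume "e \<in> E"
        hence "e \<in> ?P" using E(1) by auto
        then obtain B where "B \<in> p" "e = fB g n B" by (auto simp: phi_def)
        thus "e \<in> fB g n ` Em" using \<open>e \<in> E\<close> by (auto simp: Em_def)
      qed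
    qed
    have injEm: "inj_on (fB g n) Em"
    proof (rule inj_on_subset[OF inj_marked[OF p, of g n]])
      show "Em \<subseteq> {B \<in> p. fB g n B \<noteq> {}}" using Enon by (auto simp: Em_def)
    qed
    have cEm: "card Em = card E" using card_image[OF injEm] Eimg by simp
    have dis: "Em \<inter> unm = {}" using Enon by (auto simp: Em_def unm_def)
    have funm: "finite unm" "finite Em" using fp by (auto simp: unm_def Em_def)
    have key: "\<And>D. D \<subseteq> p \<Longrightarrow> (fB g n ` D - {{}} = E) \<longleftrightarrow> (\<exists>U. U \<subseteq> unm \<and> D = Em \<union> U)"
    proof -
      fix D assume D: "D \<subseteq> p"
      show "(fB g n ` D - {{}} = E) \<longleftrightarrow> (\<exists>U. U \<subseteq> unm \<and> D = Em \<union> U)"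
      proof
        assume a: "fB g n ` D - {{}} = E"
        have "D \<inter> {B. fB g n B \<noteq> {}} = Em"
        proof
          show "D \<inter> {B. fB g n B \<noteq> {}} \<subseteq> Em"
          proof
            fix B assume B: "B \<in> D \<inter> {B. fB g n B \<noteq> {}}"
            hence "fB g n B \<in> fB g n ` D - {{}}" by auto
            hence "fB g n B \<in> E" using a by simp
            moreover have "B \<in> p" using B D by auto
            ultimately show "B \<in> Em" by (simp add: Em_def)
          qed
          show "Em \<subseteq> D \<inter> {B. fB g n B \<noteq> {}}"
          proof
            fix B assume B: "B \<in> Em"
            hence "fB g n B \<in> fB g n ` D - {{}}" using a by (auto simp: Em_def)
            then obtain B' where "B' \<in> D" "fB g n B = fB g n B'" "fB g n B \<noteq> {}" by auto
            hence "B = B'" using fB_inj[OF p, of B B'] B D by (auto simp: Em_def)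
            thus "B \<in> D \<inter> {B. fB g n B \<noteq> {}}" using \<open>B' \<in> D\<close> \<open>fB g n B \<noteq> {}\<close> by auto
          qed
        qed
        hence X: "D \<inter> {B. fB g n B \<noteq> {}} = Em" .
        have "D = Em \<union> (D \<inter> unm)"
        proof
          show "D \<subseteq> Em \<union> (D \<inter> unm)"
          proof
            fix B assume "B \<in> D"
            show "B \<in> Em \<union> (D \<inter> unm)"
            proof (cases "fB g n B = {}")
              case True thus ?thesis using \<open>B \<in> D\<close> D by (simp add: unm_def subset_iff)
            next
              case False thus ?thesis using \<open>B \<in> D\<close> X by blast
            qed
          qed
          show "Em \<union> (D \<inter> unm) \<subseteq> D" using X by blast
        qed
        moreover have "D \<inter> unm \<subseteq> unm" by blast
        ultimately show "\<exists>U. U \<subseteq> unm \<and> D = Em \<union> U" by (intro exI[of _ "D \<inter> unm"] conjI)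
      next
        assume "\<exists>U. U \<subseteq> unm \<and> D = Em \<union> U"
        then obtain U where U: "U \<subseteq> unm" "D = Em \<union> U" by blast
        have "fB g n ` D = fB g n ` Em \<union> fB g n ` U" using U(2) by auto
        moreover have "fB g n ` U \<subseteq> {{}}" using U(1) by (auto simp: unm_def)
        ultimately have "fB g n ` D - {{}} = fB g n ` Em - {{}}" by blast
        thus "fB g n ` D - {{}} = E" using Eimg Enon by simp
      qed
    qed
    have Dchar: "\<And>D. D \<in> Dset \<longleftrightarrow> D \<subseteq> p \<and> fB g n ` D - {{}} = E"
    proof -
      fix D
      show "D \<in> Dset \<longleftrightarrow> D \<subseteq> p \<and> fB g n ` D - {{}} = E"
      proof
        assume "D \<in> Dset"
        hence D: "D \<subseteq> p" "phi g n (merge p D) = q" by (auto simp: Dset_def)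
        let ?E' = "fB g n ` D - {{}}"
        show "D \<subseteq> p \<and> ?E' = E"
        proof (cases "2 \<le> card ?E'")
          case True
          hence "merge ?P ?E' = merge ?P E" using phi_merge_cases(2)[OF p g D(1)] D(2) E(3) by simp
          hence "?E' = E" using merge_inj[OF Pst phi_merge_cases(1)[OF p g D(1)] True E(1,2)] by simp
          thus ?thesis using D by simp
        next
          case False
          thus ?thesis using phi_merge_cases(3)[OF p g D(1)] D(2) qne by simp
        qed
      next
        assume a: "D \<subseteq> p \<and> fB g n ` D - {{}} = E"
        have fD: "finite D" using a fp finite_subset by blast
        have "card E \<le> card (fB g n ` D)" using a fD by (metis Diff_subset card_mono finite_imageI)
        also have "\<dots> \<le> card D" using fD card_image_le by blast
        finally have c: "2 \<le> card D" using E(2) by simp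
        have "phi g n (merge p D) = q" using phi_merge_cases(2)[OF p g, of D] a E by simp
        thus "D \<in> Dset" using a c by (simp add: Dset_def)
      qed
    qed
    have DsetEq: "Dset = (\<lambda>U. Em \<union> U) ` Pow unm"
    proof
      show "Dset \<subseteq> (\<lambda>U. Em \<union> U) ` Pow unm"
      proof
        fix D assume "D \<in> Dset"
        hence "D \<subseteq> p" "fB g n ` D - {{}} = E" using Dchar by auto
        then obtain U where "U \<subseteq> unm" "D = Em \<union> U" using key by blast
        thus "D \<in> (\<lambda>U. Em \<union> U) ` Pow unm" by blast
      qed
      show "(\<lambda>U. Em \<union> U) ` Pow unm \<subseteq> Dset"
      proof
        fix D assume "D \<in> (\<lambda>U. Em \<union> U) ` Pow unm"
        then obtain U where U: "U \<subseteq> unm" "D = Em \<union> U" by auto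
        have "D \<subseteq> p" using U by (auto simp: Em_def unm_def)
        have "fB g n ` D - {{}} = E" using key[OF \<open>D \<subseteq> p\<close>] U by blast
        thus "D \<in> Dset" using Dchar \<open>D \<subseteq> p\<close> by blast
      qed
    qed
    have inj: "inj_on (\<lambda>U. Em \<union> U) (Pow unm)"
    proof (rule inj_onI)
      fix U V assume "U \<in> Pow unm" "V \<in> Pow unm" "Em \<union> U = Em \<union> V"
      hence "(Em \<union> U) \<inter> unm = (Em \<union> V) \<inter> unm" by simp
      thus "U = V" using dis \<open>U \<in> Pow unm\<close> \<open>V \<in> Pow unm\<close> by blast
    qed
    have cards: "\<And>U. U \<in> Pow unm \<Longrightarrow> card (Em \<union> U) = card E + card U"
    proof -
      fix U assume "U \<in> Pow unm"
      hence "finite U" "Em \<inter> U = {}" using funm dis finite_subset by auto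
      thus "card (Em \<union> U) = card E + card U" using card_Un_disjoint funm cEm by metis
    qed
    have "(\<Sum>D\<in>Dset. lam \<Lambda> (card p) (card D)) = (\<Sum>U\<in>Pow unm. lam \<Lambda> (card p) (card (Em \<union> U)))"
      unfolding DsetEq using sum.reindex[OF inj] by simp
    also have "\<dots> = (\<Sum>U\<in>Pow unm. lam \<Lambda> (card ?P + card unm) (card E + card U))"
      by (rule sum.cong[OF refl]) (simp add: cards card_phi[OF p, of g n] unm_def)
    also have "\<dots> = lam \<Lambda> (card ?P) (card E)"
    proof (rule ident[OF funm(1) E(2)])
      show "card E \<le> card ?P" using E(1) Pst states_finite_elem card_mono by blast
    qed
    finally show ?thesis using L R by simp
  next
    case False
    have "Dset = {}"
    proof (rule ccontr)
      assume "Dset \<noteq> {}"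
      then obtain D where "D \<in> Dset" by auto
      hence D: "D \<subseteq> p" "phi g n (merge p D) = q" by (auto simp: Dset_def)
      let ?E' = "fB g n ` D - {{}}"
      show False
      proof (cases "2 \<le> card ?E'")
        case True
        have "?E' \<subseteq> ?P" "q = merge ?P ?E'" using phi_merge_cases(1)[OF p g D(1)] phi_merge_cases(2)[OF p g D(1) True] D(2) by auto
        thus False using False True by blast
      next
        case F2: False
        thus False using phi_merge_cases(3)[OF p g D(1)] D(2) qne by simp
      qed
    qed
    moreover have "rate_off \<Lambda> ?P q = 0"
    proof (rule ccontr)
      assume "rate_off \<Lambda> ?P q \<noteq> 0"
      hence c: "cond ?P q" by (simp add: rate_off_cond split: if_splits)
      show False using False cond_D[OF c] by blast
    qed
    ultimately show ?thesis using L by simp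
  qed
qed

locale LamA =
  fixes \<Lambda> :: "real measure"
  assumes fm: "finite_measure \<Lambda>" and sb: "sets \<Lambda> = sets borel"
    and supp: "emeasure \<Lambda> (- {0..1}) = 0"
begin

lemma AE01: "AE x in \<Lambda>. x \<in> {0..1}"
proof (rule AE_I'[of "- {0..1}"])
  have "- {0..1::real} \<in> sets borel" by simp
  hence "- {0..1::real} \<in> sets \<Lambda>" using sb by simp
  thus "- {0..1} \<in> null_sets \<Lambda>" using supp by (simp add: null_sets_def)
  show "{x \<in> space \<Lambda>. x \<notin> {0..1}} \<subseteq> - {0..1}" by auto
qed

lemma integ: "integrable \<Lambda> (\<lambda>x. c * (x ^ a * (1 - x) ^ b))"
proof -
  interpret finite_measure \<Lambda> by (rule fm)
  have m: "(\<lambda>x::real. c * (x ^ a * (1 - x) ^ b)) \<in> borel_measurable borel" by measurable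
  have m': "(\<lambda>x::real. c * (x ^ a * (1 - x) ^ b)) \<in> borel_measurable \<Lambda>"
  proof -
    have eq: "borel_measurable \<Lambda> = (borel_measurable borel :: (real \<Rightarrow> real) set)"
      by (rule measurable_cong_sets[OF sb refl])
    show ?thesis unfolding eq by (rule m)
  qed
  have "AE x in \<Lambda>. norm (c * (x ^ a * (1 - x) ^ b)) \<le> \<bar>c\<bar>"
    using AE01
  proof (rule AE_mp, intro AE_I2 impI)
    fix x :: real assume x: "x \<in> {0..1}"
    have a1: "0 \<le> x ^ a" "x ^ a \<le> 1" using x by (auto intro: power_le_one)
    have b1: "0 \<le> (1 - x) ^ b" "(1 - x) ^ b \<le> 1" using x by (auto intro: power_le_one)
    have "x ^ a * (1 - x) ^ b \<le> 1" using a1 b1 by (metis mult_le_one)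
    moreover have "0 \<le> x ^ a * (1 - x) ^ b" using a1 b1 by simp
    ultimately have "\<bar>c\<bar> * (x ^ a * (1 - x) ^ b) \<le> \<bar>c\<bar> * 1" by (intro mult_left_mono) auto
    moreover have "\<bar>x ^ a\<bar> = x ^ a" "\<bar>(1 - x) ^ b\<bar> = (1 - x) ^ b" using a1(1) b1(1) by auto
    ultimately show "norm (c * (x ^ a * (1 - x) ^ b)) \<le> \<bar>c\<bar>"
      by (simp add: abs_mult)
  qed
  thus ?thesis using m' by (intro integrable_const_bound) auto
qed

lemma lam_ident:
  assumes "finite A" "2 \<le> k" "k \<le> c"
  shows "(\<Sum>U\<in>Pow A. lam \<Lambda> (c + card A) (k + card U)) = lam \<Lambda> c k"
proof -
  let ?u = "card A"
  have "(\<Sum>U\<in>Pow A. lam \<Lambda> (c + card A) (k + card U))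
      = (\<Sum>l\<le>?u. of_nat (?u choose l) * lam \<Lambda> (c + ?u) (k + l))"
    by (rule sum_pow_card[OF assms(1)])
  also have "\<dots> = (\<Sum>l\<le>?u. integral\<^sup>L \<Lambda> (\<lambda>x. of_nat (?u choose l) * (x ^ (k + l - 2) * (1 - x) ^ (c + ?u - (k + l)))))"
    by (simp add: lam_def)
  also have "\<dots> = integral\<^sup>L \<Lambda> (\<lambda>x. \<Sum>l\<le>?u. of_nat (?u choose l) * (x ^ (k + l - 2) * (1 - x) ^ (c + ?u - (k + l))))"
  proof -
    have "integral\<^sup>L \<Lambda> (\<lambda>x. \<Sum>l\<le>?u. real (?u choose l) * (x ^ (k + l - 2) * (1 - x) ^ (c + ?u - (k + l))))
       = (\<Sum>l\<le>?u. integral\<^sup>L \<Lambda> (\<lambda>x. real (?u choose l) * (x ^ (k + l - 2) * (1 - x) ^ (c + ?u - (k + l)))))"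
      by (rule Bochner_Integration.integral_sum) (rule integ)
    thus ?thesis by simp
  qed
  also have "\<dots> = integral\<^sup>L \<Lambda> (\<lambda>x. x ^ (k - 2) * (1 - x) ^ (c - k))"
  proof (rule Bochner_Integration.integral_cong[OF refl])
    fix x :: real
    have "(\<Sum>l\<le>?u. of_nat (?u choose l) * (x ^ (k + l - 2) * (1 - x) ^ (c + ?u - (k + l))))
        = (\<Sum>l\<le>?u. (x ^ (k - 2) * (1 - x) ^ (c - k)) * (of_nat (?u choose l) * x ^ l * (1 - x) ^ (?u - l)))"
    proof (rule sum.cong[OF refl])
      fix l assume "l \<in> {..?u}"
      hence "k + l - 2 = (k - 2) + l" "c + ?u - (k + l) = (c - k) + (?u - l)" using assms by auto
      thus "of_nat (?u choose l) * (x ^ (k + l - 2) * (1 - x) ^ (c + ?u - (k + l)))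
          = (x ^ (k - 2) * (1 - x) ^ (c - k)) * (of_nat (?u choose l) * x ^ l * (1 - x) ^ (?u - l))"
        by (simp add: power_add)
    qed
    also have "\<dots> = (x ^ (k - 2) * (1 - x) ^ (c - k)) * (x + (1 - x)) ^ ?u"
      by (simp only: binomial_ring sum_distrib_left)
    also have "\<dots> = x ^ (k - 2) * (1 - x) ^ (c - k)" by simp
    finally show "(\<Sum>l\<le>?u. of_nat (?u choose l) * (x ^ (k + l - 2) * (1 - x) ^ (c + ?u - (k + l))))
        = x ^ (k - 2) * (1 - x) ^ (c - k)" .
  qed
  also have "\<dots> = lam \<Lambda> c k" by (simp add: lam_def)
  finally show ?thesis .
qed

lemma offdiag': "p \<in> states K \<Longrightarrow> \<forall>i<n. g i < K \<Longrightarrow> q \<in> states n \<Longrightarrow> q \<noteq> phi g n p \<Longrightarrow>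
  (\<Sum>r\<in>{r\<in>states K. phi g n r = q}. rate_off \<Lambda> p r) = rate_off \<Lambda> (phi g n p) q"
  by (rule offdiag) (auto intro: lam_ident)

lemma Q_lump:
  assumes p: "p \<in> states K" and g: "\<forall>i<n. g i < K" and q: "q \<in> states n"
  shows "(\<Sum>r\<in>{r\<in>states K. phi g n r = q}. Qmat \<Lambda> K p r) = Qmat \<Lambda> n (phi g n p) q"
proof (cases "q = phi g n p")
  case False
  have "(\<Sum>r\<in>{r\<in>states K. phi g n r = q}. Qmat \<Lambda> K p r) = (\<Sum>r\<in>{r\<in>states K. phi g n r = q}. rate_off \<Lambda> p r)"
    by (rule sum.cong[OF refl]) (use False in \<open>auto simp: Qmat_def\<close>)
  also have "\<dots> = rate_off \<Lambda> (phi g n p) q" by (rule offdiag'[OF p g q False])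
  finally show ?thesis using False by (simp add: Qmat_def)
next
  case True
  let ?P = "phi g n p"
  define S where "S = {r\<in>states K. phi g n r = ?P}"
  have fS: "finite S" "finite (states K)" using finite_states by (auto simp: S_def)
  have pS: "p \<in> S" using p by (simp add: S_def)
  have "(\<Sum>r\<in>S. Qmat \<Lambda> K p r) = Qmat \<Lambda> K p p + (\<Sum>r\<in>S - {p}. Qmat \<Lambda> K p r)"
    using sum.remove[OF fS(1) pS] by simp
  also have "(\<Sum>r\<in>S - {p}. Qmat \<Lambda> K p r) = (\<Sum>r\<in>S - {p}. rate_off \<Lambda> p r)"
    by (rule sum.cong[OF refl]) (auto simp: Qmat_def)
  also have "Qmat \<Lambda> K p p = - (\<Sum>r\<in>states K - {p}. rate_off \<Lambda> p r)" by (simp add: Qmat_def)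
  also have "(\<Sum>r\<in>states K - {p}. rate_off \<Lambda> p r) = (\<Sum>r\<in>S - {p}. rate_off \<Lambda> p r) + (\<Sum>r\<in>states K - S. rate_off \<Lambda> p r)"
  proof -
    have "states K - {p} = (S - {p}) \<union> (states K - S)" using pS by (auto simp: S_def)
    moreover have "(S - {p}) \<inter> (states K - S) = {}" by auto
    ultimately show ?thesis using fS by (simp add: sum.union_disjoint)
  qed
  finally have A: "(\<Sum>r\<in>S. Qmat \<Lambda> K p r) = - (\<Sum>r\<in>states K - S. rate_off \<Lambda> p r)" by simp
  have Pst: "?P \<in> states n" by (rule phi_states[OF p g])
  have im: "phi g n ` (states K - S) \<subseteq> states n - {?P}" using phi_states[OF _ g] by (auto simp: S_def)
  have "(\<Sum>r\<in>states K - S. rate_off \<Lambda> p r)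
      = (\<Sum>q'\<in>states n - {?P}. \<Sum>r\<in>{x. x \<in> states K - S \<and> phi g n x = q'}. rate_off \<Lambda> p r)"
    using sum.group[OF _ _ im, of "rate_off \<Lambda> p"] fS finite_states by simp
  also have "\<dots> = (\<Sum>q'\<in>states n - {?P}. rate_off \<Lambda> ?P q')"
  proof (rule sum.cong[OF refl])
    fix q' assume q': "q' \<in> states n - {?P}"
    have "{x. x \<in> states K - S \<and> phi g n x = q'} = {r\<in>states K. phi g n r = q'}" using q' by (auto simp: S_def)
    thus "(\<Sum>r\<in>{x. x \<in> states K - S \<and> phi g n x = q'}. rate_off \<Lambda> p r) = rate_off \<Lambda> ?P q'"
      using offdiag'[OF p g, of q'] q' by simp
  qed
  finally show ?thesis using A True by (simp add: Qmat_def S_def)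
qed

end

fun fddS :: "real measure \<Rightarrow> nat \<Rightarrow> real \<Rightarrow> nat set set \<Rightarrow> (real \<times> nat set set set) list \<Rightarrow> real" where
  "fddS \<Lambda> n t p [] = 1"
| "fddS \<Lambda> n t p ((s, S) # xs) = (\<Sum>q\<in>S \<inter> states n. trans \<Lambda> n (s - t) p q * fddS \<Lambda> n s q xs)"

lemma trans_zero: "trans \<Lambda> n 0 p q = (if p = q then 1 else 0)"
proof -
  have "trans \<Lambda> n 0 p q = (\<Sum>m\<in>{0}. 0 ^ m / fact m * Qpow \<Lambda> n m p q)"
    unfolding trans_def by (rule suminf_finite) auto
  thus ?thesis by simp
qed

lemma fdd_fddS: "\<forall>x\<in>set xs. snd x \<in> states n \<Longrightarrow> fdd \<Lambda> n t p xs = fddS \<Lambda> n t p (map (\<lambda>(s,q). (s, {q})) xs)"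
proof (induction xs arbitrary: t p)
  case Nil thus ?case by simp
next
  case (Cons x xs)
  obtain s q where x: "x = (s, q)" by (cases x)
  have q: "q \<in> states n" using Cons.prems x by auto
  have "{q} \<inter> states n = {q}" using q by auto
  thus ?case using Cons x by simp
qed

lemma Qpow_bound:
  fixes \<Lambda> :: "real measure" and n :: nat
  defines "B \<equiv> 1 + (\<Sum>p\<in>states n. \<Sum>r\<in>states n. \<bar>Qmat \<Lambda> n p r\<bar>)"
  shows "p \<in> states n \<Longrightarrow> \<bar>Qpow \<Lambda> n m p q\<bar> \<le> B ^ m"
proof (induction m arbitrary: p)
  case 0 thus ?case by simp
next
  case (Suc m)
  have B0: "0 \<le> B" unfolding B_def by (simp add: sum_nonneg add_nonneg_nonneg)
  have "\<bar>Qpow \<Lambda> n (Suc m) p q\<bar> \<le> (\<Sum>r\<in>states n. \<bar>Qmat \<Lambda> n p r * Qpow \<Lambda> n m r q\<bar>)"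
    by (simp add: sum_abs)
  also have "\<dots> \<le> (\<Sum>r\<in>states n. \<bar>Qmat \<Lambda> n p r\<bar> * B ^ m)"
    by (rule sum_mono) (simp add: abs_mult Suc.IH mult_left_mono)
  also have "\<dots> = (\<Sum>r\<in>states n. \<bar>Qmat \<Lambda> n p r\<bar>) * B ^ m" by (simp add: sum_distrib_right)
  also have "\<dots> \<le> B * B ^ m"
  proof (rule mult_right_mono)
    have "(\<Sum>r\<in>states n. \<bar>Qmat \<Lambda> n p r\<bar>) \<le> (\<Sum>p\<in>states n. \<Sum>r\<in>states n. \<bar>Qmat \<Lambda> n p r\<bar>)"
      using member_le_sum[of p "states n" "\<lambda>p. \<Sum>r\<in>states n. \<bar>Qmat \<Lambda> n p r\<bar>"] Suc.prems finite_states
      by (simp add: sum_nonneg)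
    thus "(\<Sum>r\<in>states n. \<bar>Qmat \<Lambda> n p r\<bar>) \<le> B" unfolding B_def by simp
    show "0 \<le> B ^ m" using B0 by simp
  qed
  finally show ?case by simp
qed

lemma summable_trans:
  assumes "p \<in> states n"
  shows "summable (\<lambda>m. t ^ m / fact m * Qpow \<Lambda> n m p q)"
proof -
  define B where "B = 1 + (\<Sum>p\<in>states n. \<Sum>r\<in>states n. \<bar>Qmat \<Lambda> n p r\<bar>)"
  have b: "\<And>m. \<bar>Qpow \<Lambda> n m p q\<bar> \<le> B ^ m" using Qpow_bound[OF assms] unfolding B_def by blast
  have s: "summable (\<lambda>m. inverse (fact m) * (\<bar>t\<bar> * B) ^ m)" by (rule summable_exp)
  show ?thesis
  proof (rule summable_comparison_test'[OF s])
    fix m :: nat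
    have "norm (t ^ m / fact m * Qpow \<Lambda> n m p q) = \<bar>t\<bar> ^ m / fact m * \<bar>Qpow \<Lambda> n m p q\<bar>"
      by (simp add: abs_mult power_abs)
    also have "\<dots> \<le> \<bar>t\<bar> ^ m / fact m * B ^ m"
      by (rule mult_left_mono[OF b]) simp
    also have "\<dots> = inverse (fact m) * (\<bar>t\<bar> * B) ^ m" by (simp add: power_mult_distrib field_simps)
    finally show "norm (t ^ m / fact m * Qpow \<Lambda> n m p q) \<le> inverse (fact m) * (\<bar>t\<bar> * B) ^ m" .
  qed
qed

context LamA begin

lemma Qpow_lump:
  assumes g: "\<forall>i<n. g i < K" and q: "q \<in> states n"
  shows "\<rho> \<in> states K \<Longrightarrow> (\<Sum>r\<in>{r\<in>states K. phi g n r = q}. Qpow \<Lambda> K m \<rho> r) = Qpow \<Lambda> n m (phi g n \<rho>) q"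
proof (induction m arbitrary: \<rho>)
  case 0
  have f: "finite {r\<in>states K. phi g n r = q}" using finite_states by simp
  have "(\<Sum>r\<in>{r\<in>states K. phi g n r = q}. Qpow \<Lambda> K 0 \<rho> r) = (\<Sum>r\<in>{r\<in>states K. phi g n r = q}. if \<rho> = r then 1 else 0)"
    by simp
  also have "\<dots> = (if \<rho> \<in> {r\<in>states K. phi g n r = q} then 1 else 0)" by (rule sum.delta'[OF f])
  finally show ?case using 0 by simp
next
  case (Suc m)
  let ?S = "\<lambda>q. {r\<in>states K. phi g n r = q}"
  have fK: "finite (states K)" by (rule finite_states)
  have "(\<Sum>r\<in>?S q. Qpow \<Lambda> K (Suc m) \<rho> r) = (\<Sum>r\<in>?S q. \<Sum>u\<in>states K. Qmat \<Lambda> K \<rho> u * Qpow \<Lambda> K m u r)"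
    by simp
  also have "\<dots> = (\<Sum>u\<in>states K. \<Sum>r\<in>?S q. Qmat \<Lambda> K \<rho> u * Qpow \<Lambda> K m u r)" by (rule sum.swap)
  also have "\<dots> = (\<Sum>u\<in>states K. Qmat \<Lambda> K \<rho> u * Qpow \<Lambda> n m (phi g n u) q)"
    by (rule sum.cong[OF refl]) (simp add: sum_distrib_left[symmetric] Suc.IH)
  also have "\<dots> = (\<Sum>v\<in>states n. \<Sum>u\<in>{x. x \<in> states K \<and> phi g n x = v}. Qmat \<Lambda> K \<rho> u * Qpow \<Lambda> n m (phi g n u) q)"
  proof -
    have im: "phi g n ` states K \<subseteq> states n" using phi_states[OF _ g] by auto
    show ?thesis by (rule sum.group[OF fK finite_states im, symmetric])
  qed
  also have "\<dots> = (\<Sum>v\<in>states n. Qmat \<Lambda> n (phi g n \<rho>) v * Qpow \<Lambda> n m v q)"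
  proof (rule sum.cong[OF refl])
    fix v assume v: "v \<in> states n"
    have "(\<Sum>u\<in>{x. x \<in> states K \<and> phi g n x = v}. Qmat \<Lambda> K \<rho> u * Qpow \<Lambda> n m (phi g n u) q)
        = (\<Sum>u\<in>{x. x \<in> states K \<and> phi g n x = v}. Qmat \<Lambda> K \<rho> u * Qpow \<Lambda> n m v q)" by simp
    also have "\<dots> = (\<Sum>u\<in>?S v. Qmat \<Lambda> K \<rho> u) * Qpow \<Lambda> n m v q" by (simp add: sum_distrib_right)
    also have "\<dots> = Qmat \<Lambda> n (phi g n \<rho>) v * Qpow \<Lambda> n m v q" using Q_lump[OF Suc.prems g v] by simp
    finally show "(\<Sum>u\<in>{x. x \<in> states K \<and> phi g n x = v}. Qmat \<Lambda> K \<rho> u * Qpow \<Lambda> n m (phi g n u) q)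
        = Qmat \<Lambda> n (phi g n \<rho>) v * Qpow \<Lambda> n m v q" .
  qed
  also have "\<dots> = Qpow \<Lambda> n (Suc m) (phi g n \<rho>) q" by simp
  finally show ?case .
qed

lemma trans_lump:
  assumes g: "\<forall>i<n. g i < K" and q: "q \<in> states n" and \<rho>: "\<rho> \<in> states K"
  shows "(\<Sum>r\<in>{r\<in>states K. phi g n r = q}. trans \<Lambda> K t \<rho> r) = trans \<Lambda> n t (phi g n \<rho>) q"
proof -
  have "(\<Sum>r\<in>{r\<in>states K. phi g n r = q}. trans \<Lambda> K t \<rho> r)
     = (\<Sum>m. \<Sum>r\<in>{r\<in>states K. phi g n r = q}. t ^ m / fact m * Qpow \<Lambda> K m \<rho> r)"
    unfolding trans_def by (rule suminf_sum[symmetric]) (rule summable_trans[OF \<rho>])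
  also have "\<dots> = (\<Sum>m. t ^ m / fact m * Qpow \<Lambda> n m (phi g n \<rho>) q)"
  proof (rule suminf_cong)
    fix m
    have "(\<Sum>r\<in>{r\<in>states K. phi g n r = q}. t ^ m / fact m * Qpow \<Lambda> K m \<rho> r)
        = t ^ m / fact m * (\<Sum>r\<in>{r\<in>states K. phi g n r = q}. Qpow \<Lambda> K m \<rho> r)"
      by (rule sum_distrib_left[symmetric])
    thus "(\<Sum>r\<in>{r\<in>states K. phi g n r = q}. t ^ m / fact m * Qpow \<Lambda> K m \<rho> r)
        = t ^ m / fact m * Qpow \<Lambda> n m (phi g n \<rho>) q" using Qpow_lump[OF g q \<rho>] by simp
  qed
  finally show ?thesis unfolding trans_def .
qed

lemma fddS_lump:
  assumes g: "\<forall>i<n. g i < K"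
  shows "\<rho> \<in> states K \<Longrightarrow> fddS \<Lambda> K t \<rho> (map (\<lambda>(s,S). (s, {r. phi g n r \<in> S})) L) = fddS \<Lambda> n t (phi g n \<rho>) L"
proof (induction L arbitrary: t \<rho>)
  case Nil thus ?case by simp
next
  case (Cons x L)
  obtain s S where x: "x = (s, S)" by (cases x)
  let ?A = "{r. phi g n r \<in> S} \<inter> states K"
  have fA: "finite ?A" using finite_states by simp
  have im: "phi g n ` ?A \<subseteq> S \<inter> states n" using phi_states[OF _ g] by auto
  have "fddS \<Lambda> K t \<rho> (map (\<lambda>(s,S). (s, {r. phi g n r \<in> S})) (x # L))
      = (\<Sum>r\<in>?A. trans \<Lambda> K (s - t) \<rho> r * fddS \<Lambda> n s (phi g n r) L)"
    using Cons.IH by (simp add: x)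
  also have "\<dots> = (\<Sum>q\<in>S \<inter> states n. \<Sum>r\<in>{x. x \<in> ?A \<and> phi g n x = q}. trans \<Lambda> K (s - t) \<rho> r * fddS \<Lambda> n s (phi g n r) L)"
  proof -
    have fT: "finite (S \<inter> states n)" using finite_states by simp
    show ?thesis by (rule sum.group[OF fA fT im, symmetric])
  qed
  also have "\<dots> = (\<Sum>q\<in>S \<inter> states n. trans \<Lambda> n (s - t) (phi g n \<rho>) q * fddS \<Lambda> n s q L)"
  proof (rule sum.cong[OF refl])
    fix q assume q: "q \<in> S \<inter> states n"
    have e: "{x. x \<in> ?A \<and> phi g n x = q} = {r\<in>states K. phi g n r = q}" using q by auto
    have "(\<Sum>r\<in>{x. x \<in> ?A \<and> phi g n x = q}. trans \<Lambda> K (s - t) \<rho> r * fddS \<Lambda> n s (phi g n r) L)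
        = (\<Sum>r\<in>{r\<in>states K. phi g n r = q}. trans \<Lambda> K (s - t) \<rho> r) * fddS \<Lambda> n s q L"
      unfolding e by (simp add: sum_distrib_right)
    also have "\<dots> = trans \<Lambda> n (s - t) (phi g n \<rho>) q * fddS \<Lambda> n s q L"
      using trans_lump[OF g _ Cons.prems] q by simp
    finally show "(\<Sum>r\<in>{x. x \<in> ?A \<and> phi g n x = q}. trans \<Lambda> K (s - t) \<rho> r * fddS \<Lambda> n s (phi g n r) L)
        = trans \<Lambda> n (s - t) (phi g n \<rho>) q * fddS \<Lambda> n s q L" .
  qed
  also have "\<dots> = fddS \<Lambda> n t (phi g n \<rho>) (x # L)" by (simp add: x)
  finally show ?case .
qed

end

lemma restr_states: assumes "is_part UNIV P" shows "restr K P \<in> states K"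
proof -
  have P: "\<And>B C. B \<in> P \<Longrightarrow> C \<in> P \<Longrightarrow> B \<noteq> C \<Longrightarrow> B \<inter> C = {}" "\<Union>P = UNIV"
    using assms by (auto simp: is_part_def)
  have 1: "\<forall>B\<in>restr K P. B \<noteq> {} \<and> B \<subseteq> {..<K}" by (auto simp: restr_def)
  have 2: "\<forall>B\<in>restr K P. \<forall>C\<in>restr K P. B \<noteq> C \<longrightarrow> B \<inter> C = {}"
  proof (intro ballI impI)
    fix B C assume "B \<in> restr K P" "C \<in> restr K P" "B \<noteq> C"
    then obtain B' C' where "B' \<in> P" "C' \<in> P" "B = B' \<inter> {..<K}" "C = C' \<inter> {..<K}"
      by (auto simp: restr_def)
    moreover have "B' \<noteq> C'" using calculation \<open>B \<noteq> C\<close> by auto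
    ultimately show "B \<inter> C = {}" using P(1)[of B' C'] by auto
  qed
  have 3: "\<Union>(restr K P) = {..<K}"
  proof
    show "\<Union>(restr K P) \<subseteq> {..<K}" using 1 by auto
    show "{..<K} \<subseteq> \<Union>(restr K P)"
    proof
      fix i assume i: "i \<in> {..<K}"
      obtain B where "B \<in> P" "i \<in> B" using P(2) by blast
      hence "B \<inter> {..<K} \<in> restr K P" "i \<in> B \<inter> {..<K}" using i by (auto simp: restr_def)
      thus "i \<in> \<Union>(restr K P)" by blast
    qed
  qed
  show ?thesis using 1 2 3 by (simp add: states_def is_part_def)
qed

lemma restr_restr: assumes "K \<le> K'" shows "restr K (restr K' P) = restr K P"
proof
  have e: "\<And>B. B \<inter> {..<K'} \<inter> {..<K} = B \<inter> {..<K}" using assms by auto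
  show "restr K (restr K' P) \<subseteq> restr K P"
  proof
    fix x assume "x \<in> restr K (restr K' P)"
    then obtain B where "B \<in> P" "x = B \<inter> {..<K'} \<inter> {..<K}" "x \<noteq> {}" unfolding restr_def by blast
    thus "x \<in> restr K P" unfolding restr_def e by blast
  qed
  show "restr K P \<subseteq> restr K (restr K' P)"
  proof
    fix x assume "x \<in> restr K P"
    then obtain B where B: "B \<in> P" "x = B \<inter> {..<K}" "x \<noteq> {}" unfolding restr_def by blast
    hence "B \<inter> {..<K'} \<noteq> {}" using assms by auto
    hence "B \<inter> {..<K'} \<in> restr K' P" using B(1) unfolding restr_def by blast
    moreover have "x = B \<inter> {..<K'} \<inter> {..<K}" using B(2) e by simp
    ultimately show "x \<in> restr K (restr K' P)" using B(3) unfolding restr_def by blast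
  qed
qed

lemma restr_phi: "restr K r = phi id K r"
proof -
  have "fB id K = (\<lambda>B. B \<inter> {..<K})" by (auto simp: fB_def)
  thus ?thesis by (simp add: restr_def phi_def)
qed

lemma phi_restr: "\<forall>i<n. g i < K \<Longrightarrow> phi g n (restr K P) = phi g n P"
proof -
  assume a: "\<forall>i<n. g i < K"
  have e: "\<And>B. fB g n (B \<inter> {..<K}) = fB g n B" using a by (auto simp: fB_def)
  have "fB g n ` restr K P - {{}} = fB g n ` ((\<lambda>B. B \<inter> {..<K}) ` P) - {{}}"
    by (auto simp: restr_def fB_def)
  also have "\<dots> = fB g n ` P - {{}}" using e by (simp add: image_image)
  finally show ?thesis by (simp add: phi_def)
qed

lemma listset_iff: "qs \<in> listset As \<longleftrightarrow> list_all2 (\<in>) qs As"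
proof (induction As arbitrary: qs)
  case Nil thus ?case by auto
next
  case (Cons A As) thus ?case by (cases qs) (auto simp: set_Cons_def)
qed

lemma set_Cons_img: "set_Cons A X = (\<lambda>(a, x). a # x) ` (A \<times> X)"
  by (auto simp: set_Cons_def)

lemma finite_listset: "\<forall>A\<in>set As. finite A \<Longrightarrow> finite (listset As)"
  by (induction As) (auto simp: set_Cons_img)

lemma sum_set_Cons:
  assumes "finite A" "finite X"
  shows "(\<Sum>qs\<in>set_Cons A X. f qs) = (\<Sum>a\<in>A. \<Sum>x\<in>X. f (a # x))"
proof -
  have inj: "inj_on (\<lambda>(a, x). a # x) (A \<times> X)" by (auto simp: inj_on_def)
  have "(\<Sum>qs\<in>set_Cons A X. f qs) = (\<Sum>y\<in>A \<times> X. f (case y of (a, x) \<Rightarrow> a # x))"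
    unfolding set_Cons_img by (rule sum.reindex[OF inj, unfolded comp_def])
  also have "\<dots> = (\<Sum>a\<in>A. \<Sum>x\<in>X. f (a # x))"
    by (simp add: sum.cartesian_product split_beta)
  finally show ?thesis .
qed

lemma sum_listset_fdd:
  "(\<Sum>qs\<in>listset (map (\<lambda>s. C s \<inter> states K) ss). fdd \<Lambda> K t p (zip ss qs))
     = fddS \<Lambda> K t p (map (\<lambda>s. (s, C s)) ss)"
proof (induction ss arbitrary: t p)
  case Nil thus ?case by simp
next
  case (Cons s ss)
  have fA: "finite (C s \<inter> states K)" using finite_states by simp
  have fX: "finite (listset (map (\<lambda>s. C s \<inter> states K) ss))"
    by (rule finite_listset) (auto simp: finite_states)
  have "(\<Sum>qs\<in>listset (map (\<lambda>s. C s \<inter> states K) (s # ss)). fdd \<Lambda> K t p (zip (s # ss) qs))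
     = (\<Sum>a\<in>C s \<inter> states K. \<Sum>x\<in>listset (map (\<lambda>s. C s \<inter> states K) ss). fdd \<Lambda> K t p (zip (s # ss) (a # x)))"
    by (simp add: sum_set_Cons[OF fA fX])
  also have "\<dots> = (\<Sum>a\<in>C s \<inter> states K. trans \<Lambda> K (s - t) p a * fddS \<Lambda> K s a (map (\<lambda>s. (s, C s)) ss))"
    by (simp add: sum_distrib_left[symmetric] Cons.IH)
  finally show ?case by simp
qed

lemma fddS_split:
  "fddS \<Lambda> K t p (pre @ (T, S) # post)
     = (\<Sum>\<rho>'\<in>S \<inter> states K. fddS \<Lambda> K t p (pre @ [(T, {\<rho>'})]) * fddS \<Lambda> K T \<rho>' post)"
proof (induction pre arbitrary: t p)
  case Nil
  have "\<And>\<rho>'. \<rho>' \<in> S \<inter> states K \<Longrightarrow> {\<rho>'} \<inter> states K = {\<rho>'}" by auto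
  thus ?case by simp
next
  case (Cons x pre)
  obtain s A where x: "x = (s, A)" by (cases x)
  have "fddS \<Lambda> K t p ((x # pre) @ (T, S) # post)
      = (\<Sum>q\<in>A \<inter> states K. trans \<Lambda> K (s - t) p q *
          (\<Sum>\<rho>'\<in>S \<inter> states K. fddS \<Lambda> K s q (pre @ [(T, {\<rho>'})]) * fddS \<Lambda> K T \<rho>' post))"
    by (simp add: x Cons.IH)
  also have "\<dots> = (\<Sum>q\<in>A \<inter> states K. \<Sum>\<rho>'\<in>S \<inter> states K. trans \<Lambda> K (s - t) p q *
          (fddS \<Lambda> K s q (pre @ [(T, {\<rho>'})]) * fddS \<Lambda> K T \<rho>' post))"
    by (simp add: sum_distrib_left)
  also have "\<dots> = (\<Sum>\<rho>'\<in>S \<inter> states K. \<Sum>q\<in>A \<inter> states K. trans \<Lambda> K (s - t) p q *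
          (fddS \<Lambda> K s q (pre @ [(T, {\<rho>'})]) * fddS \<Lambda> K T \<rho>' post))"
    by (rule sum.swap)
  also have "\<dots> = (\<Sum>\<rho>'\<in>S \<inter> states K. fddS \<Lambda> K t p ((x # pre) @ [(T, {\<rho>'})]) * fddS \<Lambda> K T \<rho>' post)"
    by (simp add: x sum_distrib_right mult.assoc)
  finally show ?case .
qed

lemma sl_split:
  fixes A B :: "real set"
  assumes "finite A" "finite B" "\<forall>x\<in>A. x < T" "\<forall>x\<in>B. T < x"
  shows "sorted_list_of_set (A \<union> {T} \<union> B) = sorted_list_of_set A @ T # sorted_list_of_set B"
proof -
  let ?l = "sorted_list_of_set A @ T # sorted_list_of_set B"
  have "sorted_wrt (<) ?l"
    using assms by (auto simp: sorted_wrt_append intro: less_trans)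
  hence "sorted ?l" "distinct ?l" by (auto simp: strict_sorted_iff)
  moreover have "set ?l = A \<union> {T} \<union> B" using assms by auto
  ultimately show ?thesis using sorted_list_of_set.idem_if_sorted_distinct[of ?l] by simp
qed

lemma sl_set: "sorted_wrt (<) (xs :: real list) \<Longrightarrow> sorted_list_of_set (set xs) = xs"
  using sorted_list_of_set.idem_if_sorted_distinct[of xs] by (simp add: strict_sorted_iff)

lemma all_set_zip: "length xs = length ys \<Longrightarrow> (\<forall>x\<in>set (zip xs ys). P x) \<longleftrightarrow> (\<forall>i<length xs. P (xs ! i, ys ! i))"
  by (simp add: set_zip) (metis)

locale Coal = LamA +
  fixes M :: "'a measure" and Pr :: "real \<Rightarrow> 'a \<Rightarrow> nat set set"
  assumes lc: "lambda_coalescent \<Lambda> M 0 Pr"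
begin

lemma prob: "prob_space M" using lc by (simp add: lambda_coalescent_def)

lemma part: "0 \<le> t \<Longrightarrow> \<omega> \<in> space M \<Longrightarrow> is_part UNIV (Pr t \<omega>)"
  using lc by (simp add: lambda_coalescent_def)

lemma Xst: "0 \<le> t \<Longrightarrow> \<omega> \<in> space M \<Longrightarrow> restr K (Pr t \<omega>) \<in> states K"
  by (rule restr_states[OF part])

lemma meas1: "0 \<le> t \<Longrightarrow> {\<omega>\<in>space M. restr K (Pr t \<omega>) = p} \<in> sets M"
  using lc by (simp add: lambda_coalescent_def)

lemma measS: assumes "0 \<le> t" shows "{\<omega>\<in>space M. restr K (Pr t \<omega>) \<in> S} \<in> sets M"
proof -
  have "{\<omega>\<in>space M. restr K (Pr t \<omega>) \<in> S} = (\<Union>p\<in>S \<inter> states K. {\<omega>\<in>space M. restr K (Pr t \<omega>) = p})"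
    using Xst[OF assms] by auto
  also have "\<dots> \<in> sets M" using meas1[OF assms] finite_states by auto
  finally show ?thesis .
qed

lemma measJ: assumes "finite J" "J \<subseteq> {0..}"
  shows "{\<omega>\<in>space M. \<forall>s\<in>J. restr K (Pr s \<omega>) \<in> C s} \<in> sets M"
  by (rule sets.sets_Collect_finite_All[OF _ assms(1)]) (use measS assms(2) in auto)

lemma fddlc: "sorted_wrt (<) (map fst xs) \<Longrightarrow> (\<forall>x\<in>set xs. 0 \<le> fst x \<and> snd x \<in> states n) \<Longrightarrow>
   measure M {\<omega>\<in>space M. \<forall>x\<in>set xs. restr n (Pr (fst x) \<omega>) = snd x} = fdd \<Lambda> n 0 (singletons {..<n}) xs"
  using lc unfolding lambda_coalescent_def by blast

lemma GF_list:
  assumes ss: "sorted_wrt (<) ss" "set ss \<subseteq> {0..}"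
  shows "measure M {\<omega>\<in>space M. \<forall>s\<in>set ss. restr K (Pr s \<omega>) \<in> C s}
       = fddS \<Lambda> K 0 (singletons {..<K}) (map (\<lambda>s. (s, C s)) ss)"
proof -
  interpret prob_space M by (rule prob)
  define Q where "Q = listset (map (\<lambda>s. C s \<inter> states K) ss)"
  define E where "E = (\<lambda>qs. {\<omega>\<in>space M. map (\<lambda>s. restr K (Pr s \<omega>)) ss = qs})"
  have fQ: "finite Q" unfolding Q_def by (rule finite_listset) (auto simp: finite_states)
  have Qi: "\<And>qs. qs \<in> Q \<longleftrightarrow> length qs = length ss \<and> (\<forall>i<length ss. qs ! i \<in> C (ss ! i) \<inter> states K)"
    unfolding Q_def listset_iff list_all2_conv_all_nth by auto
  have U: "{\<omega>\<in>space M. \<forall>s\<in>set ss. restr K (Pr s \<omega>) \<in> C s} = (\<Union>qs\<in>Q. E qs)"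
  proof
    show "{\<omega>\<in>space M. \<forall>s\<in>set ss. restr K (Pr s \<omega>) \<in> C s} \<subseteq> (\<Union>qs\<in>Q. E qs)"
    proof
      fix \<omega> assume w: "\<omega> \<in> {\<omega>\<in>space M. \<forall>s\<in>set ss. restr K (Pr s \<omega>) \<in> C s}"
      have "map (\<lambda>s. restr K (Pr s \<omega>)) ss \<in> Q"
      proof -
        have "\<forall>i<length ss. restr K (Pr (ss ! i) \<omega>) \<in> C (ss ! i) \<inter> states K"
        proof (intro allI impI)
          fix i assume "i < length ss"
          hence "ss ! i \<in> set ss" by simp
          thus "restr K (Pr (ss ! i) \<omega>) \<in> C (ss ! i) \<inter> states K" using w ss(2) Xst by auto
        qed
        thus ?thesis using Qi by simp
      qed
      thus "\<omega> \<in> (\<Union>qs\<in>Q. E qs)" using w by (auto simp: E_def)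
    qed
    show "(\<Union>qs\<in>Q. E qs) \<subseteq> {\<omega>\<in>space M. \<forall>s\<in>set ss. restr K (Pr s \<omega>) \<in> C s}"
    proof
      fix \<omega> assume "\<omega> \<in> (\<Union>qs\<in>Q. E qs)"
      then obtain qs where qs: "qs \<in> Q" "\<omega> \<in> space M" "map (\<lambda>s. restr K (Pr s \<omega>)) ss = qs" by (auto simp: E_def)
      have "\<forall>s\<in>set ss. restr K (Pr s \<omega>) \<in> C s"
      proof
        fix s assume "s \<in> set ss"
        then obtain i where i: "i < length ss" "s = ss ! i" by (auto simp: in_set_conv_nth)
        have "restr K (Pr s \<omega>) = qs ! i" using qs(3) i by auto
        thus "restr K (Pr s \<omega>) \<in> C s" using Qi qs(1) i by auto
      qed
      thus "\<omega> \<in> {\<omega>\<in>space M. \<forall>s\<in>set ss. restr K (Pr s \<omega>) \<in> C s}" using qs(2) by simp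
    qed
  qed
  have EZ: "\<And>qs. qs \<in> Q \<Longrightarrow> E qs = {\<omega>\<in>space M. \<forall>x\<in>set (zip ss qs). restr K (Pr (fst x) \<omega>) = snd x}"
  proof -
    fix qs assume "qs \<in> Q"
    hence l: "length qs = length ss" using Qi by simp
    show "E qs = {\<omega>\<in>space M. \<forall>x\<in>set (zip ss qs). restr K (Pr (fst x) \<omega>) = snd x}"
      unfolding E_def using all_set_zip[OF l[symmetric]] l by (auto simp: list_eq_iff_nth_eq)
  qed
  have Em: "\<And>qs. qs \<in> Q \<Longrightarrow> measure M (E qs) = fdd \<Lambda> K 0 (singletons {..<K}) (zip ss qs)"
  proof -
    fix qs assume q: "qs \<in> Q"
    hence l: "length qs = length ss" using Qi by simp
    have "sorted_wrt (<) (map fst (zip ss qs))" using l ss(1) by simp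
    moreover have "\<forall>x\<in>set (zip ss qs). 0 \<le> fst x \<and> snd x \<in> states K"
    proof
      fix x assume "x \<in> set (zip ss qs)"
      then obtain i where "i < length ss" "x = (ss ! i, qs ! i)" using l by (auto simp: set_zip)
      moreover have "ss ! i \<in> {0..}" using subsetD[OF ss(2) nth_mem[OF \<open>i < length ss\<close>]] .
      moreover have "qs ! i \<in> states K" using Qi q \<open>i < length ss\<close> by blast
      ultimately show "0 \<le> fst x \<and> snd x \<in> states K" by auto
    qed
    ultimately show "measure M (E qs) = fdd \<Lambda> K 0 (singletons {..<K}) (zip ss qs)"
      using EZ[OF q] fddlc by simp
  qed
  have Es: "\<And>qs. qs \<in> Q \<Longrightarrow> E qs \<in> sets M"
  proof -
    fix qs assume q: "qs \<in> Q"
    have "set (zip ss qs) \<subseteq> set ss \<times> UNIV" by (auto dest: set_zip_leftD)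
    hence "{\<omega>\<in>space M. \<forall>x\<in>set (zip ss qs). restr K (Pr (fst x) \<omega>) = snd x} \<in> sets M"
      using ss(2) by (intro sets.sets_Collect_finite_All) (auto intro!: meas1)
    thus "E qs \<in> sets M" using EZ[OF q] by simp
  qed
  have "measure M (\<Union>qs\<in>Q. E qs) = (\<Sum>qs\<in>Q. measure M (E qs))"
  proof (rule measure_finite_Union[OF fQ])
    show "E ` Q \<subseteq> sets M" using Es by auto
    show "disjoint_family_on E Q" unfolding disjoint_family_on_def E_def by auto
    show "\<And>i. i \<in> Q \<Longrightarrow> emeasure M (E i) \<noteq> \<infinity>" by simp
  qed
  also have "\<dots> = (\<Sum>qs\<in>Q. fdd \<Lambda> K 0 (singletons {..<K}) (zip ss qs))" using Em by simp
  also have "\<dots> = fddS \<Lambda> K 0 (singletons {..<K}) (map (\<lambda>s. (s, C s)) ss)"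
    unfolding Q_def by (rule sum_listset_fdd)
  finally show ?thesis using U by simp
qed

lemma GF:
  assumes "finite J" "J \<subseteq> {0..}"
  shows "measure M {\<omega>\<in>space M. \<forall>s\<in>J. restr K (Pr s \<omega>) \<in> C s}
       = fddS \<Lambda> K 0 (singletons {..<K}) (map (\<lambda>s. (s, C s)) (sorted_list_of_set J))"
  using GF_list[of "sorted_list_of_set J"] assms by simp

end

context Coal begin

lemma markov_basic:
  assumes T: "0 \<le> T" and J: "finite J" "J \<subseteq> {0..T}" and J2: "finite J2" "J2 \<subseteq> {T..}"
    and \<rho>: "\<rho> \<in> states N"
  shows "measure M ({\<omega>\<in>space M. \<forall>s\<in>J. restr K (Pr s \<omega>) \<in> C s} \<inter> {\<omega>\<in>space M. restr N (Pr T \<omega>) = \<rho>}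
            \<inter> {\<omega>\<in>space M. \<forall>s\<in>J2. restr N (Pr s \<omega>) \<in> C2 s})
       = measure M ({\<omega>\<in>space M. \<forall>s\<in>J. restr K (Pr s \<omega>) \<in> C s} \<inter> {\<omega>\<in>space M. restr N (Pr T \<omega>) = \<rho>})
         * fddS \<Lambda> N T \<rho> (map (\<lambda>s. (s, C2 s)) (sorted_list_of_set J2))"
proof -
  define K' where "K' = K + N"
  have rK: "\<And>P. restr K (restr K' P) = restr K P" by (rule restr_restr) (simp add: K'_def)
  have rN: "\<And>P. restr N (restr K' P) = restr N P" by (rule restr_restr) (simp add: K'_def)
  define D0 where "D0 s = (if s \<in> J then {r. restr K r \<in> C s} else UNIV) \<inter> (if s = T then {r. restr N r = \<rho>} else UNIV)" for s
  define D where "D s = D0 s \<inter> (if s \<in> J2 then {r. restr N r \<in> C2 s} else UNIV)" for s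
  define pre where "pre = sorted_list_of_set (J - {T})"
  define post where "post = sorted_list_of_set (J2 - {T})"
  have fin: "finite (J - {T})" "finite (J2 - {T})" using J J2 by auto
  have lt: "\<forall>x\<in>J - {T}. x < T" "\<forall>x\<in>J2 - {T}. T < x" using J(2) J2(2) by fastforce+
  have S1: "sorted_list_of_set (J \<union> {T} \<union> J2) = pre @ T # post"
  proof -
    have "J \<union> {T} \<union> J2 = (J - {T}) \<union> {T} \<union> (J2 - {T})" by auto
    thus ?thesis using sl_split[OF fin lt] by (simp add: pre_def post_def)
  qed
  have S0: "sorted_list_of_set (J \<union> {T}) = pre @ [T]"
  proof -
    have "J \<union> {T} = (J - {T}) \<union> {T} \<union> {}" by auto
    thus ?thesis using sl_split[OF fin(1) finite.emptyI lt(1)] by (simp add: pre_def)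
  qed
  have Dmem: "\<And>s P. restr K' P \<in> D s \<longleftrightarrow> (s \<in> J \<longrightarrow> restr K P \<in> C s) \<and> (s = T \<longrightarrow> restr N P = \<rho>) \<and> (s \<in> J2 \<longrightarrow> restr N P \<in> C2 s)"
    by (simp add: D_def D0_def rK rN)
  have D0mem: "\<And>s P. restr K' P \<in> D0 s \<longleftrightarrow> (s \<in> J \<longrightarrow> restr K P \<in> C s) \<and> (s = T \<longrightarrow> restr N P = \<rho>)"
    by (simp add: D0_def rK rN)
  have E1: "{\<omega>\<in>space M. \<forall>s\<in>J. restr K (Pr s \<omega>) \<in> C s} \<inter> {\<omega>\<in>space M. restr N (Pr T \<omega>) = \<rho>}
            \<inter> {\<omega>\<in>space M. \<forall>s\<in>J2. restr N (Pr s \<omega>) \<in> C2 s}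
         = {\<omega>\<in>space M. \<forall>s\<in>J \<union> {T} \<union> J2. restr K' (Pr s \<omega>) \<in> D s}"
    (is "?L = ?R")
  proof (intro set_eqI iffI)
    fix \<omega> assume "\<omega> \<in> ?L" thus "\<omega> \<in> ?R" by (auto simp: Dmem)
  next
    fix \<omega> assume "\<omega> \<in> ?R" thus "\<omega> \<in> ?L" by (auto simp: Dmem)
  qed
  have E0: "{\<omega>\<in>space M. \<forall>s\<in>J. restr K (Pr s \<omega>) \<in> C s} \<inter> {\<omega>\<in>space M. restr N (Pr T \<omega>) = \<rho>}
         = {\<omega>\<in>space M. \<forall>s\<in>J \<union> {T}. restr K' (Pr s \<omega>) \<in> D0 s}"
    (is "?L = ?R")
  proof (intro set_eqI iffI)
    fix \<omega> assume "\<omega> \<in> ?L" thus "\<omega> \<in> ?R" by (auto simp: D0mem)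
  next
    fix \<omega> assume "\<omega> \<in> ?R" thus "\<omega> \<in> ?L" by (auto simp: D0mem)
  qed
  have sub1: "J \<union> {T} \<union> J2 \<subseteq> {0..}" "J \<union> {T} \<subseteq> {0..}" using J(2) J2(2) T by auto
  have preD: "map (\<lambda>s. (s, D s)) pre = map (\<lambda>s. (s, D0 s)) pre"
  proof (rule map_cong[OF refl])
    fix s assume "s \<in> set pre"
    hence "s \<in> J - {T}" using fin by (simp add: pre_def)
    hence "s < T" using lt(1) by blast
    hence "s \<notin> J2" using J2(2) by auto
    thus "(s, D s) = (s, D0 s)" by (simp add: D_def)
  qed
  have postD: "map (\<lambda>s. (s, D s)) post = map (\<lambda>(s, S). (s, {r. phi id N r \<in> S})) (map (\<lambda>s. (s, C2 s)) post)"
  proof -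
    have "\<And>s. s \<in> set post \<Longrightarrow> D s = {r. phi id N r \<in> C2 s}"
    proof -
      fix s assume "s \<in> set post"
      hence "s \<in> J2 - {T}" using fin by (simp add: post_def)
      hence "T < s" "s \<in> J2" "s \<noteq> T" using lt(2) by blast+
      hence "s \<notin> J" "s \<noteq> T" "s \<in> J2" using J(2) by auto
      thus "D s = {r. phi id N r \<in> C2 s}" by (simp add: D_def D0_def restr_phi)
    qed
    thus ?thesis by auto
  qed
  define c where "c = fddS \<Lambda> N T \<rho> (map (\<lambda>s. (s, C2 s)) post)"
  define Z where "Z = (\<Sum>\<rho>'\<in>D0 T \<inter> states K'. fddS \<Lambda> K' 0 (singletons {..<K'}) (map (\<lambda>s. (s, D0 s)) pre @ [(T, {\<rho>'})]))"
  have g: "\<forall>i<N. id i < K'" by (simp add: K'_def)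
  have post_val: "\<And>\<rho>'. \<rho>' \<in> D0 T \<inter> states K' \<Longrightarrow> fddS \<Lambda> K' T \<rho>' (map (\<lambda>s. (s, D s)) post) = c"
  proof -
    fix \<rho>' assume r: "\<rho>' \<in> D0 T \<inter> states K'"
    have "restr N \<rho>' = \<rho>" using r by (simp add: D0_def)
    hence "phi id N \<rho>' = \<rho>" by (simp add: restr_phi)
    thus "fddS \<Lambda> K' T \<rho>' (map (\<lambda>s. (s, D s)) post) = c"
    proof -
      have "fddS \<Lambda> K' T \<rho>' (map (\<lambda>(s, S). (s, {r. phi id N r \<in> S})) (map (\<lambda>s. (s, C2 s)) post))
          = fddS \<Lambda> N T (phi id N \<rho>') (map (\<lambda>s. (s, C2 s)) post)"
        by (rule fddS_lump[OF g]) (use r in simp)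
      thus ?thesis unfolding postD c_def using \<open>phi id N \<rho>' = \<rho>\<close> by simp
    qed
  qed
  have DT: "D T \<inter> states K' = (if T \<in> J2 \<and> \<rho> \<notin> C2 T then {} else D0 T \<inter> states K')"
  proof -
    have key: "\<And>r. r \<in> D T \<longleftrightarrow> r \<in> D0 T \<and> (T \<in> J2 \<longrightarrow> \<rho> \<in> C2 T)"
    proof -
      fix r
      have "r \<in> D0 T \<Longrightarrow> restr N r = \<rho>" by (simp add: D0_def)
      thus "r \<in> D T \<longleftrightarrow> r \<in> D0 T \<and> (T \<in> J2 \<longrightarrow> \<rho> \<in> C2 T)" by (auto simp: D_def)
    qed
    show ?thesis
    proof (cases "T \<in> J2 \<and> \<rho> \<notin> C2 T")
      case True thus ?thesis using key by auto
    next
      case False thus ?thesis using key by auto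
    qed
  qed
  have M1: "measure M {\<omega>\<in>space M. \<forall>s\<in>J \<union> {T} \<union> J2. restr K' (Pr s \<omega>) \<in> D s}
      = (if T \<in> J2 \<and> \<rho> \<notin> C2 T then 0 else Z * c)"
  proof -
    have "measure M {\<omega>\<in>space M. \<forall>s\<in>J \<union> {T} \<union> J2. restr K' (Pr s \<omega>) \<in> D s}
        = fddS \<Lambda> K' 0 (singletons {..<K'}) (map (\<lambda>s. (s, D s)) (sorted_list_of_set (J \<union> {T} \<union> J2)))"
      by (rule GF) (use J J2 sub1 in auto)
    also have "\<dots> = fddS \<Lambda> K' 0 (singletons {..<K'}) (map (\<lambda>s. (s, D s)) pre @ (T, D T) # map (\<lambda>s. (s, D s)) post)"
      unfolding S1 by simp
    also have "\<dots> = (\<Sum>\<rho>'\<in>D T \<inter> states K'. fddS \<Lambda> K' 0 (singletons {..<K'}) (map (\<lambda>s. (s, D s)) pre @ [(T, {\<rho>'})])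
                      * fddS \<Lambda> K' T \<rho>' (map (\<lambda>s. (s, D s)) post))"
      by (rule fddS_split)
    also have "\<dots> = (\<Sum>\<rho>'\<in>D T \<inter> states K'. fddS \<Lambda> K' 0 (singletons {..<K'}) (map (\<lambda>s. (s, D0 s)) pre @ [(T, {\<rho>'})]) * c)"
    proof (rule sum.cong[OF refl])
      fix \<rho>' assume r: "\<rho>' \<in> D T \<inter> states K'"
      hence r': "\<rho>' \<in> D0 T \<inter> states K'" by (simp add: D_def)
      show "fddS \<Lambda> K' 0 (singletons {..<K'}) (map (\<lambda>s. (s, D s)) pre @ [(T, {\<rho>'})]) * fddS \<Lambda> K' T \<rho>' (map (\<lambda>s. (s, D s)) post)
          = fddS \<Lambda> K' 0 (singletons {..<K'}) (map (\<lambda>s. (s, D0 s)) pre @ [(T, {\<rho>'})]) * c"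
        unfolding preD post_val[OF r'] ..
    qed
    also have "\<dots> = (if T \<in> J2 \<and> \<rho> \<notin> C2 T then 0 else Z * c)"
    proof (cases "T \<in> J2 \<and> \<rho> \<notin> C2 T")
      case True
      have "D T \<inter> states K' = {}" by (subst DT, rule if_P[OF True])
      thus ?thesis using True by simp
    next
      case False
      have "D T \<inter> states K' = D0 T \<inter> states K'" by (subst DT, rule if_not_P[OF False])
      thus ?thesis unfolding if_not_P[OF False] Z_def by (simp add: sum_distrib_right)
    qed
    finally show ?thesis .
  qed
  have M0: "measure M {\<omega>\<in>space M. \<forall>s\<in>J \<union> {T}. restr K' (Pr s \<omega>) \<in> D0 s} = Z"
  proof -
    have "measure M {\<omega>\<in>space M. \<forall>s\<in>J \<union> {T}. restr K' (Pr s \<omega>) \<in> D0 s}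
        = fddS \<Lambda> K' 0 (singletons {..<K'}) (map (\<lambda>s. (s, D0 s)) (sorted_list_of_set (J \<union> {T})))"
      by (rule GF) (use J sub1 in auto)
    also have "\<dots> = fddS \<Lambda> K' 0 (singletons {..<K'}) (map (\<lambda>s. (s, D0 s)) pre @ (T, D0 T) # [])"
      unfolding S0 by simp
    also have "\<dots> = (\<Sum>\<rho>'\<in>D0 T \<inter> states K'. fddS \<Lambda> K' 0 (singletons {..<K'}) (map (\<lambda>s. (s, D0 s)) pre @ [(T, {\<rho>'})])
                      * fddS \<Lambda> K' T \<rho>' [])"
      by (rule fddS_split)
    also have "\<dots> = Z" unfolding Z_def by simp
    finally show ?thesis .
  qed
  have R: "fddS \<Lambda> N T \<rho> (map (\<lambda>s. (s, C2 s)) (sorted_list_of_set J2)) = (if T \<in> J2 \<and> \<rho> \<notin> C2 T then 0 else c)"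
  proof (cases "T \<in> J2")
    case True
    have "J2 = {} \<union> {T} \<union> (J2 - {T})" using True by auto
    hence "sorted_list_of_set J2 = T # post"
      using sl_split[OF finite.emptyI fin(2) _ lt(2)] by (simp add: post_def)
    hence "fddS \<Lambda> N T \<rho> (map (\<lambda>s. (s, C2 s)) (sorted_list_of_set J2))
        = (\<Sum>q\<in>C2 T \<inter> states N. (if \<rho> = q then 1 else 0) * fddS \<Lambda> N T q (map (\<lambda>s. (s, C2 s)) post))"
      by (simp add: trans_zero)
    also have "\<dots> = (\<Sum>q\<in>C2 T \<inter> states N. (if \<rho> = q then fddS \<Lambda> N T q (map (\<lambda>s. (s, C2 s)) post) else 0))"
      by (rule sum.cong) auto
    also have "\<dots> = (if \<rho> \<in> C2 T \<inter> states N then fddS \<Lambda> N T \<rho> (map (\<lambda>s. (s, C2 s)) post) else 0)"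
      by (rule sum.delta') (use finite_states[of N] in simp)
    finally show ?thesis using True \<rho> by (simp add: c_def)
  next
    case False
    hence "J2 - {T} = J2" by auto
    thus ?thesis using False by (simp add: post_def c_def)
  qed
  have A: "measure M ({\<omega>\<in>space M. \<forall>s\<in>J. restr K (Pr s \<omega>) \<in> C s} \<inter> {\<omega>\<in>space M. restr N (Pr T \<omega>) = \<rho>}
            \<inter> {\<omega>\<in>space M. \<forall>s\<in>J2. restr N (Pr s \<omega>) \<in> C2 s}) = (if T \<in> J2 \<and> \<rho> \<notin> C2 T then 0 else Z * c)"
    by (subst E1) (rule M1)
  have B: "measure M ({\<omega>\<in>space M. \<forall>s\<in>J. restr K (Pr s \<omega>) \<in> C s} \<inter> {\<omega>\<in>space M. restr N (Pr T \<omega>) = \<rho>}) = Z"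
    by (subst E0) (rule M0)
  show ?thesis unfolding A B R by simp
qed

end

context Coal begin

definition G' :: "real \<Rightarrow> 'a set set" where
  "G' T = {{\<omega>\<in>space M. \<forall>s\<in>J. restr K (Pr s \<omega>) \<in> C s} | K J C. finite J \<and> J \<subseteq> {0..T}}"

lemma G'_Int_stable: "Int_stable (G' T)"
  unfolding Int_stable_def
proof (intro ballI)
  fix a b assume "a \<in> G' T" "b \<in> G' T"
  then obtain K J C K2 J' C' where a: "a = {\<omega>\<in>space M. \<forall>s\<in>J. restr K (Pr s \<omega>) \<in> C s}" "finite J" "J \<subseteq> {0..T}"
    and b: "b = {\<omega>\<in>space M. \<forall>s\<in>J'. restr K2 (Pr s \<omega>) \<in> C' s}" "finite J'" "J' \<subseteq> {0..T}"
    unfolding G'_def by blast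
  define C'' where "C'' s = (if s \<in> J then {r. restr K r \<in> C s} else UNIV) \<inter> (if s \<in> J' then {r. restr K2 r \<in> C' s} else UNIV)" for s
  have rK: "\<And>P. restr K (restr (K + K2) P) = restr K P" by (rule restr_restr) simp
  have rK2: "\<And>P. restr K2 (restr (K + K2) P) = restr K2 P" by (rule restr_restr) simp
  have mem: "\<And>s P. restr (K + K2) P \<in> C'' s \<longleftrightarrow> (s \<in> J \<longrightarrow> restr K P \<in> C s) \<and> (s \<in> J' \<longrightarrow> restr K2 P \<in> C' s)"
    by (simp add: C''_def rK rK2)
  have "a \<inter> b = {\<omega>\<in>space M. \<forall>s\<in>J \<union> J'. restr (K + K2) (Pr s \<omega>) \<in> C'' s}"
    (is "?L = ?R")
  proof (intro set_eqI iffI)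
    fix \<omega> assume "\<omega> \<in> ?L" thus "\<omega> \<in> ?R" using a(1) b(1) by (auto simp: mem)
  next
    fix \<omega> assume "\<omega> \<in> ?R" thus "\<omega> \<in> ?L" using a(1) b(1) by (auto simp: mem)
  qed
  moreover have "finite (J \<union> J')" "J \<union> J' \<subseteq> {0..T}" using a b by auto
  ultimately show "a \<inter> b \<in> G' T" unfolding G'_def by blast
qed

lemma G'I: "finite J \<Longrightarrow> J \<subseteq> {0..T} \<Longrightarrow> {\<omega>\<in>space M. \<forall>s\<in>J. restr K (Pr s \<omega>) \<in> C s} \<in> G' T"
  unfolding G'_def by blast

lemma G'E: assumes "a \<in> G' T"
  obtains K J C where "a = {\<omega>\<in>space M. \<forall>s\<in>J. restr K (Pr s \<omega>) \<in> C s}" "finite J" "J \<subseteq> {0..T}"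
  using assms unfolding G'_def by blast

lemma G'_sets: "G' T \<subseteq> sets M"
proof
  fix a assume "a \<in> G' T"
  then obtain K J C where a: "a = {\<omega>\<in>space M. \<forall>s\<in>J. restr K (Pr s \<omega>) \<in> C s}" "finite J" "J \<subseteq> {0..T}"
    by (rule G'E)
  have "J \<subseteq> {0..}" using a(3) by auto
  thus "a \<in> sets M" unfolding a(1) by (rule measJ[OF a(2)])
qed

lemma filt_G': "nat_filtration M Pr T \<subseteq> sigma_sets (space M) (G' T)"
  unfolding nat_filtration_def
proof (rule sigma_sets_subseteq)
  show "{{\<omega>\<in>space M. restr n (Pr s \<omega>) = p} | s n p. 0 \<le> s \<and> s \<le> T} \<subseteq> G' T"
  proof
    fix a assume "a \<in> {{\<omega>\<in>space M. restr n (Pr s \<omega>) = p} | s n p. 0 \<le> s \<and> s \<le> T}"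
    then obtain s n p where a: "a = {\<omega>\<in>space M. restr n (Pr s \<omega>) = p}" "0 \<le> s" "s \<le> T" by blast
    have "a = {\<omega>\<in>space M. \<forall>s'\<in>{s}. restr n (Pr s' \<omega>) \<in> (\<lambda>_. {p}) s'}" using a(1) by simp
    moreover have "{\<omega>\<in>space M. \<forall>s'\<in>{s}. restr n (Pr s' \<omega>) \<in> (\<lambda>_. {p}) s'} \<in> G' T"
      by (rule G'I) (use a in auto)
    ultimately show "a \<in> G' T" by simp
  qed
qed

lemma filt_sets: "nat_filtration M Pr T \<subseteq> sets M"
  using filt_G' sets.sigma_sets_subset[OF G'_sets] by blast

lemma markov:
  assumes T: "0 \<le> T" and W: "W \<in> nat_filtration M Pr T" and J2: "finite J2" "J2 \<subseteq> {T..}"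
    and \<rho>: "\<rho> \<in> states N"
  shows "measure M (W \<inter> {\<omega>\<in>space M. restr N (Pr T \<omega>) = \<rho>} \<inter> {\<omega>\<in>space M. \<forall>s\<in>J2. restr N (Pr s \<omega>) \<in> C2 s})
       = measure M (W \<inter> {\<omega>\<in>space M. restr N (Pr T \<omega>) = \<rho>}) * fddS \<Lambda> N T \<rho> (map (\<lambda>s. (s, C2 s)) (sorted_list_of_set J2))"
proof -
  interpret prob_space M by (rule prob)
  define X where "X = {\<omega>\<in>space M. restr N (Pr T \<omega>) = \<rho>}"
  define F where "F = {\<omega>\<in>space M. \<forall>s\<in>J2. restr N (Pr s \<omega>) \<in> C2 s}"
  define c where "c = fddS \<Lambda> N T \<rho> (map (\<lambda>s. (s, C2 s)) (sorted_list_of_set J2))"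
  have Xs: "X \<in> sets M" unfolding X_def by (rule meas1[OF T])
  have Fs: "F \<in> sets M" unfolding F_def by (rule measJ) (use J2 T in auto)
  have base: "\<And>K J C. finite J \<Longrightarrow> J \<subseteq> {0..T} \<Longrightarrow>
     measure M ({\<omega>\<in>space M. \<forall>s\<in>J. restr K (Pr s \<omega>) \<in> C s} \<inter> X \<inter> F)
      = measure M ({\<omega>\<in>space M. \<forall>s\<in>J. restr K (Pr s \<omega>) \<in> C s} \<inter> X) * c"
    unfolding X_def F_def c_def by (rule markov_basic[OF T _ _ J2 \<rho>])
  have sp: "measure M (X \<inter> F) = measure M X * c"
  proof -
    have e: "{\<omega>\<in>space M. \<forall>s\<in>{}. restr 0 (Pr s \<omega>) \<in> (\<lambda>_. {}) s} = space M" by simp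
    have "X \<subseteq> space M" by (simp add: X_def)
    hence "space M \<inter> X = X" by blast
    thus ?thesis using base[of "{}" 0 "\<lambda>_. {}"] unfolding e by (simp add: Int_assoc)
  qed
  have G'_pow: "G' T \<subseteq> Pow (space M)" using G'_sets sets.sets_into_space by blast
  have WG: "W \<in> sigma_sets (space M) (G' T)" using W filt_G' by blast
  have "measure M (W \<inter> X \<inter> F) = measure M (W \<inter> X) * c"
    using G'_Int_stable G'_pow WG
  proof (induction rule: sigma_sets_induct_disjoint)
    case (basic A)
    then obtain K J C where "A = {\<omega>\<in>space M. \<forall>s\<in>J. restr K (Pr s \<omega>) \<in> C s}" "finite J" "J \<subseteq> {0..T}"
      by (rule G'E)
    thus ?case using base by simp
  next
    case empty thus ?case by simp
  next
    case (compl A)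
    have As: "A \<in> sets M" using compl(1) sets.sigma_sets_subset[OF G'_sets] by blast
    have Xsp: "X \<subseteq> space M" by (simp add: X_def)
    have e1: "(space M - A) \<inter> X \<inter> F = (X \<inter> F) - (A \<inter> X \<inter> F)" using Xsp by blast
    have e2: "(space M - A) \<inter> X = X - (A \<inter> X)" using Xsp by blast
    have "measure M ((space M - A) \<inter> X \<inter> F) = measure M (X \<inter> F) - measure M (A \<inter> X \<inter> F)"
      unfolding e1 by (rule finite_measure_Diff) (use As Xs Fs in auto)
    moreover have "measure M ((space M - A) \<inter> X) = measure M X - measure M (A \<inter> X)"
      unfolding e2 by (rule finite_measure_Diff) (use As Xs in auto)
    ultimately show ?case using compl(2) sp by (simp add: left_diff_distrib)
  next
    case (union A)
    have As: "\<And>i. A i \<in> sets M" using union(2) sets.sigma_sets_subset[OF G'_sets] by blast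
    have d1: "disjoint_family (\<lambda>i. A i \<inter> X \<inter> F)" using union(1) unfolding disjoint_family_on_def by blast
    have d2: "disjoint_family (\<lambda>i. A i \<inter> X)" using union(1) unfolding disjoint_family_on_def by blast
    have s1: "(\<lambda>i. measure M (A i \<inter> X \<inter> F)) sums measure M (\<Union>i. A i \<inter> X \<inter> F)"
      by (rule finite_measure_UNION[OF _ d1]) (use As Xs Fs in auto)
    have s2: "(\<lambda>i. measure M (A i \<inter> X)) sums measure M (\<Union>i. A i \<inter> X)"
      by (rule finite_measure_UNION[OF _ d2]) (use As Xs in auto)
    have s3: "(\<lambda>i. measure M (A i \<inter> X \<inter> F)) sums (measure M (\<Union>i. A i \<inter> X) * c)"
      using sums_mult2[OF s2, of c] union(3) by simp
    have "measure M (\<Union>i. A i \<inter> X \<inter> F) = measure M (\<Union>i. A i \<inter> X) * c"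
      using sums_unique2[OF s1 s3] .
    moreover have "(\<Union>i. A i \<inter> X \<inter> F) = (\<Union>i. A i) \<inter> X \<inter> F" "(\<Union>i. A i \<inter> X) = (\<Union>i. A i) \<inter> X" by auto
    ultimately show ?case by simp
  qed
  thus ?thesis by (simp add: X_def F_def c_def)
qed

end

lemma bl_ex1: assumes "is_part UNIV P" shows "\<exists>!B. B \<in> P \<and> x \<in> B"
proof -
  have U: "\<Union>P = UNIV" and D: "\<And>B C. B \<in> P \<Longrightarrow> C \<in> P \<Longrightarrow> B \<noteq> C \<Longrightarrow> B \<inter> C = {}"
    using assms unfolding is_part_def by auto
  obtain B where B: "B \<in> P" "x \<in> B" using U by blast
  show ?thesis
  proof (rule ex1I[of _ B])
    show "B \<in> P \<and> x \<in> B" using B by simp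
    fix C assume "C \<in> P \<and> x \<in> C"
    thus "C = B" using D[of C B] B by blast
  qed
qed

lemma bl_in: assumes "is_part UNIV P" shows "bl P x \<in> P" "x \<in> bl P x"
proof -
  have "bl P x \<in> P \<and> x \<in> bl P x" unfolding bl_def by (rule theI'[OF bl_ex1[OF assms]])
  thus "bl P x \<in> P" "x \<in> bl P x" by auto
qed

lemma bl_eq: assumes "is_part UNIV P" "B \<in> P" "x \<in> B" shows "bl P x = B"
  unfolding bl_def by (rule the1_equality[OF bl_ex1[OF assms(1)]]) (use assms(2,3) in simp)

lemma bl_iff: assumes "is_part UNIV P" "B \<in> P" shows "x \<in> B \<longleftrightarrow> bl P x = B"
  using bl_eq[OF assms] bl_in(2)[OF assms(1), of x] by auto

lemma part_of_rel_img: "part_of_rel R = (\<lambda>i. {j. R i j}) ` UNIV"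
  unfolding part_of_rel_def by auto

lemma part_of_rel_part: "is_part UNIV (part_of_rel (\<lambda>i j. f i = f j))"
proof -
  let ?P = "(\<lambda>i. {j. f i = f j}) ` UNIV"
  have 1: "\<forall>B\<in>?P. B \<noteq> {} \<and> B \<subseteq> UNIV" by blast
  have 2: "\<forall>B\<in>?P. \<forall>C\<in>?P. B \<noteq> C \<longrightarrow> B \<inter> C = {}"
  proof (intro ballI impI)
    fix B C assume "B \<in> ?P" "C \<in> ?P" "B \<noteq> C"
    then obtain i i' where "B = {j. f i = f j}" "C = {j. f i' = f j}" by blast
    moreover have "f i \<noteq> f i'" using calculation \<open>B \<noteq> C\<close> by auto
    ultimately show "B \<inter> C = {}" by auto
  qed
  have 3: "\<Union>?P = UNIV" by blast
  show ?thesis unfolding part_of_rel_img is_part_def using 1 2 3 by blast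
qed

lemma restr_part_of_rel:
  assumes P: "is_part UNIV P"
  shows "restr n (part_of_rel (\<lambda>i j. bl P (g i) = bl P (g j))) = phi g n P"
proof
  show "restr n (part_of_rel (\<lambda>i j. bl P (g i) = bl P (g j))) \<subseteq> phi g n P"
  proof
    fix x assume "x \<in> restr n (part_of_rel (\<lambda>i j. bl P (g i) = bl P (g j)))"
    then obtain i where x: "x = {j. bl P (g i) = bl P (g j)} \<inter> {..<n}" "x \<noteq> {}"
      unfolding restr_def part_of_rel_img by blast
    let ?B = "bl P (g i)"
    have B: "?B \<in> P" by (rule bl_in(1)[OF P])
    have "x = fB g n ?B" unfolding x(1) fB_def using bl_iff[OF P B] by auto
    thus "x \<in> phi g n P" using B x(2) unfolding phi_def by blast
  qed
  show "phi g n P \<subseteq> restr n (part_of_rel (\<lambda>i j. bl P (g i) = bl P (g j)))"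
  proof
    fix x assume "x \<in> phi g n P"
    then obtain B where B: "B \<in> P" "x = fB g n B" "x \<noteq> {}" unfolding phi_def by blast
    then obtain i0 where i0: "i0 \<in> x" by blast
    hence "g i0 \<in> B" using B(2) by (simp add: fB_def)
    hence b0: "bl P (g i0) = B" using bl_eq[OF P B(1)] by blast
    have "x = {j. bl P (g i0) = bl P (g j)} \<inter> {..<n}"
      unfolding B(2) fB_def b0 using bl_iff[OF P B(1)] by auto
    thus "x \<in> restr n (part_of_rel (\<lambda>i j. bl P (g i) = bl P (g j)))"
      using B(3) unfolding restr_def part_of_rel_img by blast
  qed
qed

lemma phi_cong: "(\<And>i. i < n \<Longrightarrow> g i = g' i) \<Longrightarrow> phi g n P = phi g' n P"
proof -
  assume "\<And>i. i < n \<Longrightarrow> g i = g' i"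
  hence "fB g n = fB g' n" unfolding fB_def by (intro ext) auto
  thus ?thesis by (simp add: phi_def)
qed

lemma restr_singletons: "restr n (singletons UNIV) = singletons {..<n}"
proof
  show "restr n (singletons UNIV) \<subseteq> singletons {..<n}"
  proof
    fix x assume "x \<in> restr n (singletons UNIV)"
    then obtain i where "x = {i} \<inter> {..<n}" "x \<noteq> {}" unfolding restr_def singletons_def by blast
    hence "i < n" "x = {i}" by (auto split: if_splits)
    thus "x \<in> singletons {..<n}" unfolding singletons_def by blast
  qed
  show "singletons {..<n} \<subseteq> restr n (singletons UNIV)"
  proof
    fix x assume "x \<in> singletons {..<n}"
    then obtain i where "i < n" "x = {i}" unfolding singletons_def by blast
    hence "x = {i} \<inter> {..<n}" "x \<noteq> {}" by auto
    thus "x \<in> restr n (singletons UNIV)" unfolding restr_def singletons_def by blast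
  qed
qed

lemma card_below_range:
  assumes "strict_mono (w :: nat \<Rightarrow> nat)"
  shows "card {m. m < w k \<and> m \<in> range w} = k"
proof -
  have "{m. m < w k \<and> m \<in> range w} = w ` {..<k}"
  proof
    show "{m. m < w k \<and> m \<in> range w} \<subseteq> w ` {..<k}"
    proof
      fix m assume "m \<in> {m. m < w k \<and> m \<in> range w}"
      then obtain j where "m = w j" "w j < w k" by blast
      hence "j < k" using strict_mono_less[OF assms] by blast
      thus "m \<in> w ` {..<k}" using \<open>m = w j\<close> by blast
    qed
    show "w ` {..<k} \<subseteq> {m. m < w k \<and> m \<in> range w}"
      using strict_mono_less[OF assms] by blast
  qed
  moreover have "inj_on w {..<k}" using strict_mono_imp_inj_on[OF assms] inj_on_subset by blast
  ultimately show ?thesis by (simp add: card_image)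
qed

lemma w_val_iff:
  assumes "strict_mono (w :: nat \<Rightarrow> nat)"
  shows "w i = v \<longleftrightarrow> v \<in> range w \<and> card {m. m < v \<and> m \<in> range w} = i"
proof
  assume "w i = v" thus "v \<in> range w \<and> card {m. m < v \<and> m \<in> range w} = i"
    using card_below_range[OF assms] by auto
next
  assume a: "v \<in> range w \<and> card {m. m < v \<and> m \<in> range w} = i"
  then obtain k where k: "v = w k" by auto
  hence "k = i" using a card_below_range[OF assms, of k] by simp
  thus "w i = v" using k by simp
qed

lemma W_filt:
  fixes w :: "'a \<Rightarrow> nat \<Rightarrow> nat" and M :: "'a measure"
  assumes sm: "\<forall>\<omega>\<in>space M. strict_mono (w \<omega>)"
    and R: "\<forall>m. {\<omega>\<in>space M. m \<in> range (w \<omega>)} \<in> nat_filtration M Pr T"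
  shows "{\<omega>\<in>space M. map (w \<omega>) [0..<n] = a} \<in> nat_filtration M Pr T"
proof -
  let ?F = "nat_filtration M Pr T"
  interpret F: sigma_algebra "space M" ?F
    unfolding nat_filtration_def by (rule sigma_algebra_sigma_sets) blast
  have Rm: "\<And>m Z. {\<omega>\<in>space M. (m \<in> range (w \<omega>)) = (m \<in> Z)} \<in> ?F"
  proof -
    fix m :: nat and Z
    show "{\<omega>\<in>space M. (m \<in> range (w \<omega>)) = (m \<in> Z)} \<in> ?F"
    proof (cases "m \<in> Z")
      case True thus ?thesis using R by simp
    next
      case False
      have "{\<omega>\<in>space M. (m \<in> range (w \<omega>)) = (m \<in> Z)} = space M - {\<omega>\<in>space M. m \<in> range (w \<omega>)}"
        using False by auto
      thus ?thesis using R F.top F.Diff by metis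
    qed
  qed
  have V: "\<And>i v. {\<omega>\<in>space M. w \<omega> i = v} \<in> ?F"
  proof -
    fix i v
    have "{\<omega>\<in>space M. w \<omega> i = v} = {\<omega>\<in>space M. v \<in> range (w \<omega>)} \<inter>
        (\<Union>Z\<in>{Z. Z \<subseteq> {..<v} \<and> card Z = i}. {\<omega>\<in>space M. \<forall>m\<in>{..<v}. (m \<in> range (w \<omega>)) = (m \<in> Z)})"
      (is "?L = ?A \<inter> ?U")
    proof (intro set_eqI iffI)
      fix \<omega> assume "\<omega> \<in> ?L"
      hence o: "\<omega> \<in> space M" "w \<omega> i = v" by auto
      hence c: "v \<in> range (w \<omega>)" "card {m. m < v \<and> m \<in> range (w \<omega>)} = i"
        using w_val_iff[of "w \<omega>" i v] sm by auto
      let ?Z = "{m. m < v \<and> m \<in> range (w \<omega>)}"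
      have "?Z \<in> {Z. Z \<subseteq> {..<v} \<and> card Z = i}" using c by auto
      moreover have "\<omega> \<in> {\<omega>\<in>space M. \<forall>m\<in>{..<v}. (m \<in> range (w \<omega>)) = (m \<in> ?Z)}" using o by auto
      ultimately show "\<omega> \<in> ?A \<inter> ?U" using o c by blast
    next
      fix \<omega> assume "\<omega> \<in> ?A \<inter> ?U"
      then obtain Z where Z: "Z \<subseteq> {..<v}" "card Z = i" "\<omega> \<in> space M" "v \<in> range (w \<omega>)"
        "\<forall>m\<in>{..<v}. (m \<in> range (w \<omega>)) = (m \<in> Z)" by blast
      have "{m. m < v \<and> m \<in> range (w \<omega>)} = Z" using Z(1,5) by auto
      hence "card {m. m < v \<and> m \<in> range (w \<omega>)} = i" using Z(2) by simp
      hence "w \<omega> i = v" using w_val_iff[of "w \<omega>" i v] sm Z(3,4) by auto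
      thus "\<omega> \<in> ?L" using Z(3) by simp
    qed
    moreover have "?A \<in> ?F" using R by simp
    moreover have "?U \<in> ?F"
    proof (rule F.finite_UN)
      show "finite {Z. Z \<subseteq> {..<v} \<and> card Z = i}" by simp
      fix Z assume "Z \<in> {Z. Z \<subseteq> {..<v} \<and> card Z = i}"
      show "{\<omega>\<in>space M. \<forall>m\<in>{..<v}. (m \<in> range (w \<omega>)) = (m \<in> Z)} \<in> ?F"
        by (rule F.sets_Collect_finite_All) (use Rm in auto)
    qed
    ultimately show "{\<omega>\<in>space M. w \<omega> i = v} \<in> ?F" by auto
  qed
  show ?thesis
  proof (cases "length a = n")
    case True
    have "{\<omega>\<in>space M. map (w \<omega>) [0..<n] = a} = {\<omega>\<in>space M. \<forall>i\<in>{..<n}. w \<omega> i = a ! i}"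
      using True by (auto simp: list_eq_iff_nth_eq)
    also have "\<dots> \<in> ?F" by (rule F.sets_Collect_finite_All) (use V in auto)
    finally show ?thesis .
  next
    case False
    hence e: "{\<omega>\<in>space M. map (w \<omega>) [0..<n] = a} = {}" by auto
    show ?thesis unfolding e by (rule F.empty_sets)
  qed
qed

theorem theorem6:
  fixes \<Lambda> :: "real measure" and M :: "'a measure" and Pr :: "real \<Rightarrow> 'a \<Rightarrow> nat set set"
    and T :: real and w :: "'a \<Rightarrow> nat \<Rightarrow> nat"
  assumes "finite_measure \<Lambda>" and "sets \<Lambda> = sets borel"
    and "emeasure \<Lambda> (- {0..1}) = 0" and "emeasure \<Lambda> {1} = 0"
    and "lambda_coalescent \<Lambda> M 0 Pr"
    and "T > 0"
    and "\<forall>\<omega>\<in>space M. strict_mono (w \<omega>)"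
    and "\<forall>m. {\<omega>\<in>space M. m \<in> range (w \<omega>)} \<in> nat_filtration M Pr T"
    and "\<forall>\<omega>\<in>space M. \<forall>B\<in>Pr T \<omega>. card (range (w \<omega>) \<inter> B) = 1"
  shows "lambda_coalescent \<Lambda> M T
           (\<lambda>t \<omega>. part_of_rel (\<lambda>i j. bl (Pr t \<omega>) (w \<omega> i) = bl (Pr t \<omega>) (w \<omega> j)))"
proof -
  have LA: "LamA \<Lambda>" by (rule LamA.intro[OF assms(1,2,3)])
  have CA: "Coal \<Lambda> M Pr" by (rule Coal.intro[OF LA Coal_axioms.intro[OF assms(5)]])
  interpret Coal \<Lambda> M Pr by (rule CA)
  interpret prob_space M by (rule prob)
  define Pt where "Pt = (\<lambda>t \<omega>. part_of_rel (\<lambda>i j. bl (Pr t \<omega>) (w \<omega> i) = bl (Pr t \<omega>) (w \<omega> j)))"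
  define W where "W n a = {\<omega>\<in>space M. map (w \<omega>) [0..<n] = a}" for n a
  define Ma where "Ma a = Suc (sum_list a)" for a :: "nat list"
  have T0: "0 \<le> T" using assms(6) by simp
  have Wf: "\<And>n a. W n a \<in> nat_filtration M Pr T"
    unfolding W_def by (rule W_filt) (use assms(7,8) in auto)
  have Ws: "\<And>n a. W n a \<in> sets M" using Wf filt_sets by blast
  have key: "\<And>(t::real) \<omega> n. 0 \<le> t \<Longrightarrow> \<omega> \<in> space M \<Longrightarrow> restr n (Pt t \<omega>) = phi (w \<omega>) n (Pr t \<omega>)"
    unfolding Pt_def by (rule restr_part_of_rel[OF part])
  have Wmem: "\<And>\<omega> n a. \<omega> \<in> W n a \<Longrightarrow> \<omega> \<in> space M \<and> length a = n \<and> (\<forall>i<n. w \<omega> i = a ! i)"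
  proof -
    fix \<omega> n a assume "\<omega> \<in> W n a"
    hence o: "\<omega> \<in> space M" "map (w \<omega>) [0..<n] = a" by (auto simp: W_def)
    hence "length a = n" by auto
    moreover have "\<forall>i<n. w \<omega> i = a ! i" using o(2) by auto
    ultimately show "\<omega> \<in> space M \<and> length a = n \<and> (\<forall>i<n. w \<omega> i = a ! i)" using o(1) by simp
  qed
  have gK: "\<And>a n. length a = n \<Longrightarrow> \<forall>i<n. a ! i < Ma a"
    unfolding Ma_def using elem_le_sum_list by (metis le_imp_less_Suc)
  have keyW: "\<And>(t::real) \<omega> n a. 0 \<le> t \<Longrightarrow> \<omega> \<in> W n a \<Longrightarrow> restr n (Pt t \<omega>) = phi (\<lambda>i. a ! i) n (restr (Ma a) (Pr t \<omega>))"
  proof -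
    fix t :: real and \<omega> n a assume t: "0 \<le> t" and o: "\<omega> \<in> W n a"
    note om = Wmem[OF o]
    have "restr n (Pt t \<omega>) = phi (w \<omega>) n (Pr t \<omega>)" using key t om by blast
    also have "\<dots> = phi (\<lambda>i. a ! i) n (Pr t \<omega>)" by (rule phi_cong) (use om in blast)
    also have "\<dots> = phi (\<lambda>i. a ! i) n (restr (Ma a) (Pr t \<omega>))"
      by (rule phi_restr[symmetric]) (use gK om in blast)
    finally show "restr n (Pt t \<omega>) = phi (\<lambda>i. a ! i) n (restr (Ma a) (Pr t \<omega>))" .
  qed
  have sing: "\<And>\<omega>. \<omega> \<in> space M \<Longrightarrow> Pt T \<omega> = singletons UNIV"
  proof -
    fix \<omega> assume o: "\<omega> \<in> space M"
    have P: "is_part UNIV (Pr T \<omega>)" by (rule part[OF T0 o])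
    have inj: "inj (w \<omega>)" using assms(7) o strict_mono_imp_inj_on by blast
    have blk: "\<And>i. {j. bl (Pr T \<omega>) (w \<omega> i) = bl (Pr T \<omega>) (w \<omega> j)} = {i}"
    proof -
      fix i
      show "{j. bl (Pr T \<omega>) (w \<omega> i) = bl (Pr T \<omega>) (w \<omega> j)} = {i}"
      proof (intro set_eqI iffI)
        fix j assume "j \<in> {j. bl (Pr T \<omega>) (w \<omega> i) = bl (Pr T \<omega>) (w \<omega> j)}"
        hence e: "bl (Pr T \<omega>) (w \<omega> i) = bl (Pr T \<omega>) (w \<omega> j)" by simp
        let ?B = "bl (Pr T \<omega>) (w \<omega> i)"
        have B: "?B \<in> Pr T \<omega>" by (rule bl_in(1)[OF P])
        have "w \<omega> i \<in> range (w \<omega>) \<inter> ?B" "w \<omega> j \<in> range (w \<omega>) \<inter> ?B"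
          using bl_in(2)[OF P, of "w \<omega> i"] bl_in(2)[OF P, of "w \<omega> j"] e by auto
        moreover have "card (range (w \<omega>) \<inter> ?B) = 1" using assms(9) o B by blast
        ultimately have "w \<omega> i = w \<omega> j" by (metis card_1_singletonE singletonD)
        thus "j \<in> {i}" using inj by (simp add: inj_eq)
      qed simp
    qed
    show "Pt T \<omega> = singletons UNIV"
      unfolding Pt_def part_of_rel_img singletons_def blk by simp
  qed
  have Wun: "\<And>n. (\<Union>a. W n a) = space M"
  proof -
    fix n show "(\<Union>a. W n a) = space M"
    proof (intro set_eqI iffI)
      fix \<omega> assume "\<omega> \<in> (\<Union>a. W n a)" thus "\<omega> \<in> space M" by (auto simp: W_def)
    next
      fix \<omega> assume "\<omega> \<in> space M"
      hence "\<omega> \<in> W n (map (w \<omega>) [0..<n])" by (simp add: W_def)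
      thus "\<omega> \<in> (\<Union>a. W n a)" by blast
    qed
  qed
  have Wdisj: "\<And>n. disjoint_family (W n)"
    unfolding disjoint_family_on_def W_def by auto
  have meas: "\<And>(t::real) n p. T \<le> t \<Longrightarrow> {\<omega>\<in>space M. restr n (Pt t \<omega>) = p} \<in> sets M"
  proof -
    fix t :: real and n p assume t: "T \<le> t"
    hence t0: "0 \<le> t" using T0 by simp
    have "{\<omega>\<in>space M. restr n (Pt t \<omega>) = p}
        = (\<Union>a\<in>UNIV. W n a \<inter> {\<omega>\<in>space M. restr (Ma a) (Pr t \<omega>) \<in> {r. phi (\<lambda>i. a ! i) n r = p}})"
      (is "?L = ?R")
    proof (intro set_eqI iffI)
      fix \<omega> assume o: "\<omega> \<in> ?L"
      hence "\<omega> \<in> W n (map (w \<omega>) [0..<n])" by (simp add: W_def)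
      thus "\<omega> \<in> ?R" using keyW[OF t0] o by blast
    next
      fix \<omega> assume "\<omega> \<in> ?R"
      then obtain a where "\<omega> \<in> W n a" "restr (Ma a) (Pr t \<omega>) \<in> {r. phi (\<lambda>i. a ! i) n r = p}" by blast
      thus "\<omega> \<in> ?L" using keyW[OF t0] Wmem by blast
    qed
    also have "\<dots> \<in> sets M"
      by (rule sets.countable_UN) (use Ws measS[OF t0] in blast)
    finally show "{\<omega>\<in>space M. restr n (Pt t \<omega>) = p} \<in> sets M" .
  qed
  have fddpart: "\<And>n xs. sorted_wrt (<) (map fst xs) \<Longrightarrow> (\<forall>x\<in>set xs. T \<le> fst x \<and> snd x \<in> states n) \<Longrightarrow>
      measure M {\<omega>\<in>space M. \<forall>x\<in>set xs. restr n (Pt (fst x) \<omega>) = snd x} = fdd \<Lambda> n T (singletons {..<n}) xs"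
  proof -
    fix n xs assume sorted: "sorted_wrt (<) (map fst xs)" and xsT: "\<forall>x\<in>set xs. T \<le> fst x \<and> snd x \<in> states n"
    define c where "c = fdd \<Lambda> n T (singletons {..<n}) xs"
    define E where "E = {\<omega>\<in>space M. \<forall>x\<in>set xs. restr n (Pt (fst x) \<omega>) = snd x}"
    have Es: "E \<in> sets M" unfolding E_def
      by (rule sets.sets_Collect_finite_All) (use meas xsT in auto)
    have A: "\<And>a. measure M (W n a \<inter> E) = measure M (W n a) * c"
    proof -
      fix a
      show "measure M (W n a \<inter> E) = measure M (W n a) * c"
      proof (cases "length a = n")
        case False
        hence "W n a = {}" using Wmem by blast
        thus ?thesis by simp
      next
        case True
        define K where "K = Ma a"
        define g where "g = (\<lambda>i. a ! i)"
        have gk: "\<forall>i<n. g i < K" unfolding g_def K_def using gK[OF True] .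
        define J2 where "J2 = fst ` set xs"
        define C2 where "C2 s = {r. \<forall>x\<in>set xs. fst x = s \<longrightarrow> phi g n r = snd x}" for s
        define F where "F = {\<omega>\<in>space M. \<forall>s\<in>J2. restr K (Pr s \<omega>) \<in> C2 s}"
        have J2f: "finite J2" "J2 \<subseteq> {T..}" using xsT unfolding J2_def by auto
        have kW: "\<And>\<omega> x. \<omega> \<in> W n a \<Longrightarrow> x \<in> set xs \<Longrightarrow> restr n (Pt (fst x) \<omega>) = phi g n (restr K (Pr (fst x) \<omega>))"
        proof -
          fix \<omega> x assume "\<omega> \<in> W n a" "x \<in> set xs"
          moreover have "0 \<le> fst x" using xsT \<open>x \<in> set xs\<close> T0 by force
          ultimately show "restr n (Pt (fst x) \<omega>) = phi g n (restr K (Pr (fst x) \<omega>))"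
            unfolding g_def K_def using keyW by blast
        qed
        have E1: "W n a \<inter> E = W n a \<inter> F"
        proof (intro set_eqI iffI)
          fix \<omega> assume o: "\<omega> \<in> W n a \<inter> E"
          have "\<forall>s\<in>J2. restr K (Pr s \<omega>) \<in> C2 s"
          proof
            fix s assume "s \<in> J2"
            show "restr K (Pr s \<omega>) \<in> C2 s" unfolding C2_def
            proof (intro CollectI ballI impI)
              fix x assume "x \<in> set xs" "fst x = s"
              thus "phi g n (restr K (Pr s \<omega>)) = snd x" using kW[of \<omega> x] o unfolding E_def by auto
            qed
          qed
          thus "\<omega> \<in> W n a \<inter> F" using o unfolding F_def E_def by blast
        next
          fix \<omega> assume o: "\<omega> \<in> W n a \<inter> F"
          have "\<forall>x\<in>set xs. restr n (Pt (fst x) \<omega>) = snd x"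
          proof
            fix x assume x: "x \<in> set xs"
            hence "fst x \<in> J2" unfolding J2_def by blast
            hence "restr K (Pr (fst x) \<omega>) \<in> C2 (fst x)" using o unfolding F_def by blast
            hence "phi g n (restr K (Pr (fst x) \<omega>)) = snd x" using x unfolding C2_def by blast
            thus "restr n (Pt (fst x) \<omega>) = snd x" using kW[of \<omega> x] o x by auto
          qed
          thus "\<omega> \<in> W n a \<inter> E" using o unfolding F_def E_def by blast
        qed
        define Xr where "Xr \<rho> = {\<omega>\<in>space M. restr K (Pr T \<omega>) = \<rho>}" for \<rho>
        have Xrs: "\<And>\<rho>. Xr \<rho> \<in> sets M" unfolding Xr_def by (rule meas1[OF T0])
        have Fs: "F \<in> sets M" unfolding F_def by (rule measJ) (use J2f T0 in auto)
        have msum: "\<And>S. S \<in> sets M \<Longrightarrow> measure M S = (\<Sum>\<rho>\<in>states K. measure M (S \<inter> Xr \<rho>))"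
        proof -
          fix S assume S: "S \<in> sets M"
          have "S = (\<Union>\<rho>\<in>states K. S \<inter> Xr \<rho>)"
            using sets.sets_into_space[OF S] Xst[OF T0] unfolding Xr_def by blast
          hence "measure M S = measure M (\<Union>\<rho>\<in>states K. S \<inter> Xr \<rho>)" by simp
          also have "\<dots> = (\<Sum>\<rho>\<in>states K. measure M (S \<inter> Xr \<rho>))"
          proof (rule measure_finite_Union[OF finite_states])
            show "(\<lambda>\<rho>. S \<inter> Xr \<rho>) ` states K \<subseteq> sets M" using S Xrs by blast
            show "disjoint_family_on (\<lambda>\<rho>. S \<inter> Xr \<rho>) (states K)"
              unfolding disjoint_family_on_def Xr_def by blast
            show "\<And>i. i \<in> states K \<Longrightarrow> emeasure M (S \<inter> Xr i) \<noteq> \<infinity>" by simp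
          qed
          finally show "measure M S = (\<Sum>\<rho>\<in>states K. measure M (S \<inter> Xr \<rho>))" .
        qed
        have sl: "sorted_list_of_set J2 = map fst xs" unfolding J2_def
          using sl_set[OF sorted] by simp
        have injf: "inj_on fst (set xs)"
          using sorted by (simp add: strict_sorted_iff distinct_map)
        have C2x: "\<And>x. x \<in> set xs \<Longrightarrow> C2 (fst x) = {r. phi g n r \<in> {snd x}}"
        proof -
          fix x assume x: "x \<in> set xs"
          have "\<And>x'. x' \<in> set xs \<Longrightarrow> fst x' = fst x \<Longrightarrow> x' = x" using injf x unfolding inj_on_def by blast
          thus "C2 (fst x) = {r. phi g n r \<in> {snd x}}" unfolding C2_def using x by auto
        qed
        have mapeq: "map (\<lambda>s. (s, C2 s)) (sorted_list_of_set J2)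
            = map (\<lambda>(s, S). (s, {r. phi g n r \<in> S})) (map (\<lambda>(s, q). (s, {q})) xs)"
        proof -
          have "map (\<lambda>s. (s, C2 s)) (sorted_list_of_set J2) = map (\<lambda>x. (fst x, C2 (fst x))) xs"
            unfolding sl by simp
          also have "\<dots> = map (\<lambda>x. (fst x, {r. phi g n r \<in> {snd x}})) xs"
            by (rule map_cong[OF refl]) (simp add: C2x)
          also have "\<dots> = map (\<lambda>(s, S). (s, {r. phi g n r \<in> S})) (map (\<lambda>(s, q). (s, {q})) xs)"
            by (simp add: split_beta)
          finally show ?thesis .
        qed
        have xsst: "\<forall>x\<in>set xs. snd x \<in> states n" using xsT by blast
        have mk: "\<And>\<rho>. \<rho> \<in> states K \<Longrightarrow> measure M (W n a \<inter> Xr \<rho> \<inter> F) = measure M (W n a \<inter> Xr \<rho>) * fdd \<Lambda> n T (phi g n \<rho>) xs"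
        proof -
          fix \<rho> assume r: "\<rho> \<in> states K"
          have "measure M (W n a \<inter> Xr \<rho> \<inter> F) = measure M (W n a \<inter> Xr \<rho>) * fddS \<Lambda> K T \<rho> (map (\<lambda>s. (s, C2 s)) (sorted_list_of_set J2))"
            unfolding Xr_def F_def by (rule markov[OF T0 Wf J2f r])
          also have "fddS \<Lambda> K T \<rho> (map (\<lambda>s. (s, C2 s)) (sorted_list_of_set J2)) = fdd \<Lambda> n T (phi g n \<rho>) xs"
            unfolding mapeq fddS_lump[OF gk r] fdd_fddS[OF xsst] ..
          finally show "measure M (W n a \<inter> Xr \<rho> \<inter> F) = measure M (W n a \<inter> Xr \<rho>) * fdd \<Lambda> n T (phi g n \<rho>) xs" .
        qed
        have mc: "\<And>\<rho>. \<rho> \<in> states K \<Longrightarrow> measure M (W n a \<inter> Xr \<rho>) * fdd \<Lambda> n T (phi g n \<rho>) xs = measure M (W n a \<inter> Xr \<rho>) * c"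
        proof -
          fix \<rho> assume r: "\<rho> \<in> states K"
          show "measure M (W n a \<inter> Xr \<rho>) * fdd \<Lambda> n T (phi g n \<rho>) xs = measure M (W n a \<inter> Xr \<rho>) * c"
          proof (cases "W n a \<inter> Xr \<rho> = {}")
            case True thus ?thesis by simp
          next
            case False
            then obtain \<omega> where o: "\<omega> \<in> W n a" "restr K (Pr T \<omega>) = \<rho>" unfolding Xr_def by blast
            have "phi g n \<rho> = restr n (Pt T \<omega>)" using keyW[OF T0 o(1)] o(2) unfolding g_def K_def by simp
            also have "\<dots> = singletons {..<n}" using sing Wmem[OF o(1)] restr_singletons by simp
            finally show ?thesis unfolding c_def by simp
          qed
        qed
        have WFs: "W n a \<inter> F \<in> sets M" using Ws Fs by blast
        have "measure M (W n a \<inter> E) = measure M (W n a \<inter> F)" unfolding E1 ..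
        also have "\<dots> = (\<Sum>\<rho>\<in>states K. measure M (W n a \<inter> F \<inter> Xr \<rho>))" by (rule msum[OF WFs])
        also have "\<dots> = (\<Sum>\<rho>\<in>states K. measure M (W n a \<inter> Xr \<rho>) * c)"
        proof (rule sum.cong[OF refl])
          fix \<rho> assume r: "\<rho> \<in> states K"
          have "W n a \<inter> F \<inter> Xr \<rho> = W n a \<inter> Xr \<rho> \<inter> F" by blast
          thus "measure M (W n a \<inter> F \<inter> Xr \<rho>) = measure M (W n a \<inter> Xr \<rho>) * c" using mk[OF r] mc[OF r] by simp
        qed
        also have "\<dots> = measure M (W n a) * c" using msum[OF Ws] by (simp add: sum_distrib_right)
        finally show ?thesis .
      qed
    qed
    have UE: "E = (\<Union>a. W n a \<inter> E)" using Wun[of n] sets.sets_into_space[OF Es] by blast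
    have em1: "emeasure M E = (\<integral>\<^sup>+a. emeasure M (W n a \<inter> E) \<partial>count_space UNIV)"
    proof -
      have "emeasure M (\<Union>a. W n a \<inter> E) = (\<integral>\<^sup>+a. emeasure M (W n a \<inter> E) \<partial>count_space UNIV)"
      proof (rule emeasure_UN_countable)
        show "\<And>i. i \<in> UNIV \<Longrightarrow> W n i \<inter> E \<in> sets M" using Ws Es by blast
        show "countable (UNIV :: nat list set)" by simp
        show "disjoint_family_on (\<lambda>a. W n a \<inter> E) UNIV"
          using Wdisj[of n] unfolding disjoint_family_on_def by blast
      qed
      thus ?thesis using UE by simp
    qed
    have em2: "emeasure M (space M) = (\<integral>\<^sup>+a. emeasure M (W n a) \<partial>count_space UNIV)"
    proof -
      have "emeasure M (\<Union>a. W n a) = (\<integral>\<^sup>+a. emeasure M (W n a) \<partial>count_space UNIV)"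
        by (rule emeasure_UN_countable) (use Ws Wdisj in auto)
      thus ?thesis using Wun[of n] by simp
    qed
    have c0: "0 \<le> c"
    proof (rule ccontr)
      assume "\<not> 0 \<le> c"
      hence cn: "c < 0" by simp
      have z: "\<And>a. emeasure M (W n a) = 0"
      proof -
        fix a
        have "0 \<le> measure M (W n a \<inter> E)" by simp
        hence "0 \<le> measure M (W n a) * c" using A by simp
        moreover have "0 \<le> measure M (W n a)" by simp
        ultimately have "measure M (W n a) = 0" using cn by (simp add: zero_le_mult_iff)
        thus "emeasure M (W n a) = 0" by (simp add: emeasure_eq_measure)
      qed
      have "emeasure M (space M) = 0" using em2 z by simp
      thus False using emeasure_space_1 by simp
    qed
    have "emeasure M E = (\<integral>\<^sup>+a. ennreal c * emeasure M (W n a) \<partial>count_space UNIV)"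
    proof -
      have "\<And>a. emeasure M (W n a \<inter> E) = ennreal c * emeasure M (W n a)"
      proof -
        fix a
        have "emeasure M (W n a \<inter> E) = ennreal (measure M (W n a) * c)" using A by (simp add: emeasure_eq_measure)
        also have "\<dots> = ennreal c * ennreal (measure M (W n a))" using c0 by (simp add: ennreal_mult mult.commute)
        finally show "emeasure M (W n a \<inter> E) = ennreal c * emeasure M (W n a)" by (simp add: emeasure_eq_measure)
      qed
      thus ?thesis using em1 by simp
    qed
    also have "\<dots> = ennreal c * emeasure M (space M)" using em2 by (simp add: nn_integral_cmult)
    also have "\<dots> = ennreal c" using emeasure_space_1 by simp
    finally have "emeasure M E = ennreal c" .
    hence "measure M E = c" using c0 by (simp add: measure_def)
    thus "measure M {\<omega>\<in>space M. \<forall>x\<in>set xs. restr n (Pt (fst x) \<omega>) = snd x} = fdd \<Lambda> n T (singletons {..<n}) xs"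
      unfolding E_def c_def .
  qed
  show ?thesis
    unfolding Pt_def[symmetric] lambda_coalescent_def
  proof (intro conjI)
    show "prob_space M" by (rule prob)
    show "\<forall>t\<ge>T. \<forall>\<omega>\<in>space M. is_part UNIV (Pt t \<omega>)"
      unfolding Pt_def by (auto intro: part_of_rel_part)
    show "\<forall>\<omega>\<in>space M. Pt T \<omega> = singletons UNIV" using sing by blast
    show "\<forall>t\<ge>T. \<forall>n p. {\<omega>\<in>space M. restr n (Pt t \<omega>) = p} \<in> sets M" using meas by blast
    show "\<forall>n xs. sorted_wrt (<) (map fst xs) \<and> (\<forall>x\<in>set xs. T \<le> fst x \<and> snd x \<in> states n) \<longrightarrow>
       measure M {\<omega>\<in>space M. \<forall>x\<in>set xs. restr n (Pt (fst x) \<omega>) = snd x} = fdd \<Lambda> n T (singletons {..<n}) xs"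
      using fddpart by blast
  qed
qed

end
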